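(* Let $V:\mathbb{G}\to\mathbb{R}$ be any real function, $L\ge1$, and $E\in\mathbb{R}$. Let $X^L,Y^L$ be any two operators from the set $\{H^{\mathbb{G}_L,\bullet},\,H^{\widetilde{\mathbb{G}}_L,\bullet}:\bullet\in\{S,N,D\}\}$. Then $$|\mathcal N(E;X^L)-\mathcal N(E;Y^L)|\le 9.$$ Moreover, write $\mathbb{G}_L=\bigcup_{i=1}^3\mathbb{G}_{L-1,i}$ with $\mathbb{G}_{L-1,1}=\mathbb{G}_{L-1}$, $\mathbb{G}_{L-1,2}=\mathbb{G}_{L-1}+2^{L-1}a_2$, $\mathbb{G}_{L-1,3}=\mathbb{G}_{L-1}+2^{L-1}a_3$, and let $\widetilde{\mathbb{G}}_{L-1,i}$ be the corresponding truncated triangles. If $X^L=H^{\mathbb{G}_L,\bullet}$ put $X^{L-1,i}=H^{\mathbb{G}_{L-1,i},\bullet}$, and if $X^L=H^{\widetilde{\mathbb{G}}_L,\bullet}$ put $X^{L-1,i}=H^{\widetilde{\mathbb{G}}_{L-1,i},\bullet}$ (same boundary condition $\bullet$). Then $$\Big|\mathcal N(E;X^L)-\sum_{i=1}^3\mathcal N(E;X^{L-1,i})\Big|\le 30.$$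
   Context: Let $a_1=(0,0)$, $a_2=(1,0)$, $a_3=(1/2,\sqrt3/2)$, $T_0$ the unit equilateral triangle with these vertices, $T_{n+1}=T_n\cup(T_n+2^na_2)\cup(T_n+2^na_3)$. $\mathbb{G}_n$ is the set of vertices of unit triangles (translates of $T_0$) in $T_n$, with $x\sim y$ iff $x\ne y$ lie on a common unit triangle; the Sierpinski lattice is $\mathbb{G}=\bigcup_n(\mathbb{G}_n\cup\mathbb{G}_n')$, $\mathbb{G}_n'$ the mirror image in the $y$-axis; $\deg(x)=4$ denotes the degree of $x$ in $\mathbb{G}$, and for $A\subseteq\mathbb{G}$, $\deg_A(x)=\#\{y\in A:y\sim x\}$. The extreme vertices of $\mathbb{G}_L$ (or of a translate of it) are the three corners of its largest triangle, and the truncated triangle $\widetilde{\mathbb{G}}_L$ is $\mathbb{G}_L$ with its three extreme vertices removed. For finite $A\subseteq\mathbb{G}$ and $f\in\ell^2(A)$ define three Laplacians: simple ($\bullet=S$): $-\Delta^{A,S}f(x)=\deg(x)f(x)-\sum_{y\in A,y\sim x}f(y)$; Neumann ($\bullet=N$): $-\Delta^{A,N}f(x)=\deg_A(x)f(x)-\sum_{y\in A,y\sim x}f(y)$; modified Dirichlet ($\bullet=D$): $-\Delta^{A,D}f(x)=(2\deg(x)-\deg_A(x))f(x)-\sum_{y\in A,y\sim x}f(y)$; and $H^{A,\bullet}=-\Delta^{A,\bullet}+V|_A$ on $\ell^2(A)$ with $V|_A$ the multiplication operator by $V$ restricted to $A$. For a self-adjoint operator $X$ on a finite-dimensional space, $\mathcal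 N(E;X)$ is the number of eigenvalues (with multiplicity) $\le E$. *)

theory Defs
  imports "HOL-Analysis.Analysis" "HOL-Library.Function_Algebras"
begin

type_synonym pt = "real \<times> real"

definition a1 :: pt where "a1 = (0, 0)"
definition a2 :: pt where "a2 = (1, 0)"
definition a3 :: pt where "a3 = (1/2, sqrt 3 / 2)"

text \<open>Lower-left corners of the unit triangles (translates of T_0) contained in T_n.\<close>
fun corners :: "nat \<Rightarrow> pt set" where
  "corners 0 = {a1}"
| "corners (Suc n) = corners n \<union> (\<lambda>c. c + (2::real)^n *\<^sub>R a2) ` corners n
                              \<union> (\<lambda>c. c + (2::real)^n *\<^sub>R a3) ` corners n"

definition tri :: "pt \<Rightarrow> pt set" where
  "tri c = {c + a1, c + a2, c + a3}"

definition mirror :: "pt \<Rightarrow> pt" where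
  "mirror p = (- fst p, snd p)"

definition Gn :: "nat \<Rightarrow> pt set" where
  "Gn n = \<Union> (tri ` corners n)"

definition SG :: "pt set" where
  "SG = (\<Union>n. Gn n \<union> mirror ` Gn n)"

definition unit_tris :: "pt set set" where
  "unit_tris = {tri c | c n. c \<in> corners n} \<union> {mirror ` tri c | c n. c \<in> corners n}"

definition adj :: "pt \<Rightarrow> pt \<Rightarrow> bool" where
  "adj x y \<longleftrightarrow> x \<noteq> y \<and> x \<in> SG \<and> y \<in> SG \<and> (\<exists>t\<in>unit_tris. x \<in> t \<and> y \<in> t)"

definition deg :: "pt \<Rightarrow> nat" where
  "deg x = card {y. adj x y}"

definition degA :: "pt set \<Rightarrow> pt \<Rightarrow> nat" where
  "degA A x = card {y \<in> A. adj x y}"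

definition extreme :: "nat \<Rightarrow> pt set" where
  "extreme L = {a1, (2::real)^L *\<^sub>R a2, (2::real)^L *\<^sub>R a3}"

definition Gtil :: "nat \<Rightarrow> pt set" where
  "Gtil L = Gn L - extreme L"

datatype bc = S | N | D

text \<open>H^{A,bc} = -Laplacian^{A,bc} + V|_A acting on l^2(A), realised on functions vanishing off A.\<close>
definition Hop :: "pt set \<Rightarrow> bc \<Rightarrow> (pt \<Rightarrow> real) \<Rightarrow> (pt \<Rightarrow> real) \<Rightarrow> (pt \<Rightarrow> real)" where
  "Hop A b V f = (\<lambda>x. if x \<in> A then
       (case b of
          S \<Rightarrow> real (deg x)
        | N \<Rightarrow> real (degA A x)
        | D \<Rightarrow> 2 * real (deg x) - real (degA A x)) * f x
       - (\<Sum>y\<in>{y \<in> A. adj y x}. f y) + V x * f x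
     else 0)"

definition l2 :: "pt set \<Rightarrow> (pt \<Rightarrow> real) set" where
  "l2 A = {f. \<forall>x. x \<notin> A \<longrightarrow> f x = 0}"

definition fscale :: "real \<Rightarrow> (pt \<Rightarrow> real) \<Rightarrow> (pt \<Rightarrow> real)" where
  "fscale c f = (\<lambda>x. c * f x)"

definition eigenspace :: "pt set \<Rightarrow> ((pt \<Rightarrow> real) \<Rightarrow> (pt \<Rightarrow> real)) \<Rightarrow> real \<Rightarrow> (pt \<Rightarrow> real) set" where
  "eigenspace A X lam = {f \<in> l2 A. X f = fscale lam f}"

definition is_eigenvalue :: "pt set \<Rightarrow> ((pt \<Rightarrow> real) \<Rightarrow> (pt \<Rightarrow> real)) \<Rightarrow> real \<Rightarrow> bool" where
  "is_eigenvalue A X lam \<longleftrightarrow> (\<exists>f \<in> eigenspace A X lam. f \<noteq> 0)"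

text \<open>Eigenvalue counting function N(E;X) on l^2(A): eigenvalues <= E counted with multiplicity
  (multiplicity = dimension of the eigenspace; X is self-adjoint).\<close>
definition Ncount :: "real \<Rightarrow> pt set \<Rightarrow> ((pt \<Rightarrow> real) \<Rightarrow> (pt \<Rightarrow> real)) \<Rightarrow> nat" where
  "Ncount E A X = (\<Sum>lam\<in>{lam. is_eigenvalue A X lam \<and> lam \<le> E}.
                     vector_space.dim fscale (eigenspace A X lam))"

definition dom_L :: "nat \<Rightarrow> bool \<Rightarrow> pt set" where
  "dom_L L t = (if t then Gtil L else Gn L)"

definition shift :: "nat \<Rightarrow> nat \<Rightarrow> pt" where
  "shift L i = (if i = 1 then 0 else if i = 2 then (2::real)^(L-1) *\<^sub>R a2 else (2::real)^(L-1) *\<^sub>R a3)"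

definition subdom :: "nat \<Rightarrow> bool \<Rightarrow> nat \<Rightarrow> pt set" where
  "subdom L t i = (\<lambda>p. p + shift L i) ` dom_L (L - 1) t"

end

theory Submission
  imports Defs
begin


lemma underdet:
  fixes a :: "'j \<Rightarrow> 'i \<Rightarrow> real"
  assumes "finite J" "finite I" "card J < card I"
  shows "\<exists>c. (\<forall>i. i \<notin> I \<longrightarrow> c i = 0) \<and> (\<exists>i\<in>I. c i \<noteq> 0) \<and> (\<forall>j\<in>J. (\<Sum>i\<in>I. a j i * c i) = 0)"
  using assms
proof (induction J arbitrary: I a rule: finite_induct)
  case empty
  then obtain i0 where "i0 \<in> I" by (metis card.empty all_not_in_conv less_irrefl)
  then show ?case by (intro exI[of _ "\<lambda>i. if i = i0 then 1 else 0"]) auto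
next
  case (insert j J)
  show ?case
  proof (cases "\<forall>i\<in>I. a j i = 0")
    case True
    from insert.IH[of I a] insert.prems insert.hyps obtain c where
      c: "(\<forall>i. i \<notin> I \<longrightarrow> c i = 0)" "(\<exists>i\<in>I. c i \<noteq> 0)" "(\<forall>j\<in>J. (\<Sum>i\<in>I. a j i * c i) = 0)"
      by auto
    then show ?thesis using True by (intro exI[of _ c]) auto
  next
    case False
    then obtain i0 where i0: "i0 \<in> I" "a j i0 \<noteq> 0" by auto
    define I' where "I' = I - {i0}"
    define a' where "a' = (\<lambda>j' i. a j' i - a j' i0 * a j i / a j i0)"
    have cI': "card I' = card I - 1" using i0 insert.prems unfolding I'_def by auto
    have "card J < card I'" using cI' insert.prems insert.hyps by auto
    from insert.IH[of I' a'] this insert.prems obtain c' where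
      c': "(\<forall>i. i \<notin> I' \<longrightarrow> c' i = 0)" "(\<exists>i\<in>I'. c' i \<noteq> 0)" "(\<forall>j\<in>J. (\<Sum>i\<in>I'. a' j i * c' i) = 0)"
      unfolding I'_def by auto
    define c where "c = (\<lambda>i. if i = i0 then - (\<Sum>i'\<in>I'. a j i' * c' i') / a j i0 else c' i)"
    have split: "(\<Sum>i\<in>I. g i) = g i0 + (\<Sum>i\<in>I'. g i)" for g :: "'i \<Rightarrow> real"
      using i0 insert.prems unfolding I'_def by (simp add: sum.remove)
    have cI'eq: "(\<Sum>i\<in>I'. h i * c i) = (\<Sum>i\<in>I'. h i * c' i)" for h
      by (rule sum.cong) (auto simp: c_def I'_def)
    have eqj: "(\<Sum>i\<in>I. a j i * c i) = 0"
      unfolding split cI'eq using i0 by (simp add: c_def)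
    have eqJ: "(\<Sum>i\<in>I. a j' i * c i) = 0" if "j' \<in> J" for j'
    proof -
      have "(\<Sum>i\<in>I. a j' i * c i) = a j' i0 * c i0 + (\<Sum>i\<in>I'. a j' i * c' i)"
        unfolding split cI'eq ..
      also have "\<dots> = (\<Sum>i\<in>I'. a' j' i * c' i)"
        using i0 by (simp add: c_def a'_def algebra_simps sum_subtractf sum_divide_distrib sum_distrib_left)
      finally show ?thesis using c'(3) that by simp
    qed
    show ?thesis
      apply (intro exI[of _ c] conjI)
      using c' i0 eqj eqJ by (auto simp: c_def I'_def)
  qed
qed




definition ip :: "pt set \<Rightarrow> (pt \<Rightarrow> real) \<Rightarrow> (pt \<Rightarrow> real) \<Rightarrow> real" where
  "ip A f g = (\<Sum>x\<in>A. f x * g x)"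
definition opM :: "pt set \<Rightarrow> (pt \<Rightarrow> pt \<Rightarrow> real) \<Rightarrow> (pt \<Rightarrow> real) \<Rightarrow> (pt \<Rightarrow> real)" where
  "opM A M f = (\<lambda>x. if x \<in> A then (\<Sum>y\<in>A. M x y * f y) else 0)"
definition lc :: "nat set \<Rightarrow> (nat \<Rightarrow> real) \<Rightarrow> (nat \<Rightarrow> pt \<Rightarrow> real) \<Rightarrow> pt \<Rightarrow> real" where
  "lc I c v = (\<lambda>x. \<Sum>i\<in>I. c i * v i x)"
definition symm :: "pt set \<Rightarrow> (pt \<Rightarrow> pt \<Rightarrow> real) \<Rightarrow> bool" where
  "symm A M \<longleftrightarrow> (\<forall>x\<in>A. \<forall>y\<in>A. M x y = M y x)"
definition orthn :: "pt set \<Rightarrow> (nat \<Rightarrow> pt \<Rightarrow> real) \<Rightarrow> nat \<Rightarrow> bool" where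
  "orthn A v n \<longleftrightarrow> (\<forall>i<n. v i \<in> l2 A) \<and> (\<forall>i<n. \<forall>j<n. ip A (v i) (v j) = (if i = j then 1 else 0))"
definition ONB :: "pt set \<Rightarrow> (pt \<Rightarrow> pt \<Rightarrow> real) \<Rightarrow> (nat \<Rightarrow> pt \<Rightarrow> real) \<Rightarrow> (nat \<Rightarrow> real) \<Rightarrow> nat \<Rightarrow> bool" where
  "ONB A M v lam n \<longleftrightarrow> orthn A v n \<and> (\<forall>i<n. opM A M (v i) = fscale (lam i) (v i))"

lemma l2D: "f \<in> l2 A \<Longrightarrow> x \<notin> A \<Longrightarrow> f x = 0"
  unfolding l2_def by blast

lemma l2I: "(\<And>x. x \<notin> A \<Longrightarrow> f x = 0) \<Longrightarrow> f \<in> l2 A"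
  unfolding l2_def by blast

lemma ip_sym: "ip A f g = ip A g f" unfolding ip_def by (simp add: mult.commute)

lemma ip_self_nonneg: "ip A f f \<ge> 0" unfolding ip_def by (simp add: sum_nonneg)

lemma ip_self_zero: assumes "finite A" "f \<in> l2 A" "ip A f f = 0" shows "f = 0"
proof -
  have "\<forall>x\<in>A. f x * f x = 0" using assms(1,3) unfolding ip_def
    by (subst sum_nonneg_eq_0_iff[symmetric]) auto
  then have "f x = 0" for x using l2D[OF assms(2)] by (cases "x \<in> A") auto
  then show ?thesis by auto
qed

lemma ip_lc_left: "finite I \<Longrightarrow> ip A (lc I c v) g = (\<Sum>i\<in>I. c i * ip A (v i) g)"
  unfolding ip_def lc_def by (simp add: sum_distrib_left sum_distrib_right sum.swap[of _ A] mult.assoc)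

lemma orthn_ip_lc:
  assumes "orthn A v n" "I \<subseteq> {..<n}" "j < n"
  shows "ip A (lc I c v) (v j) = (if j \<in> I then c j else 0)"
proof -
  have fI: "finite I" using assms(2) finite_subset by blast
  have "ip A (lc I c v) (v j) = (\<Sum>i\<in>I. c i * (if i = j then 1 else 0))"
    unfolding ip_lc_left[OF fI] using assms unfolding orthn_def
    by (intro sum.cong) auto
  also have "\<dots> = (if j \<in> I then c j else 0)"
    using fI by (simp add: if_distrib sum.delta' cong: if_cong)
  finally show ?thesis .
qed

lemma ortho_bound:
  assumes fA: "finite A" and o: "\<forall>i<m. \<forall>j<m. ip A (w i) (w j) = (if i = j then 1 else 0)"
  shows "m \<le> card A"
proof (rule ccontr)
  assume "\<not> m \<le> card A"
  then have "card A < card {..<m}" by simp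
  from underdet[OF fA finite_lessThan this, of "\<lambda>x i. w i x"] obtain c where
    c: "\<forall>i. i \<notin> {..<m} \<longrightarrow> c i = 0" "\<exists>i\<in>{..<m}. c i \<noteq> 0"
      "\<forall>x\<in>A. (\<Sum>i<m. w i x * c i) = 0" by auto
  then obtain i0 where i0: "i0 < m" "c i0 \<noteq> 0" by auto
  have "0 = (\<Sum>x\<in>A. (\<Sum>i<m. w i x * c i) * w i0 x)" using c(3) by simp
  also have "\<dots> = (\<Sum>i<m. c i * ip A (w i) (w i0))"
    unfolding ip_def by (simp add: sum_distrib_right sum_distrib_left sum.swap[of _ A] algebra_simps)
  also have "\<dots> = (\<Sum>i<m. c i * (if i = i0 then 1 else 0))"
    using o i0 by (intro sum.cong) auto
  also have "\<dots> = c i0" using i0 by (simp add: if_distrib sum.delta' cong: if_cong)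
  finally show False using i0 by simp
qed

lemma lc_l2: "(\<forall>i\<in>I. v i \<in> l2 A) \<Longrightarrow> lc I c v \<in> l2 A"
  unfolding lc_def l2_def by auto

lemma expansion:
  assumes fA: "finite A" and o: "orthn A v (card A)" and f: "f \<in> l2 A"
  shows "f = lc {..<card A} (\<lambda>i. ip A f (v i)) v"
proof -
  let ?n = "card A"
  define g where "g = (\<lambda>x. f x - lc {..<?n} (\<lambda>i. ip A f (v i)) v x)"
  have gl2: "g \<in> l2 A" using f lc_l2[of "{..<?n}" v A] o unfolding g_def l2_def orthn_def by auto
  have gv: "ip A g (v j) = 0" if "j < ?n" for j
  proof -
    have "ip A g (v j) = ip A f (v j) - ip A (lc {..<?n} (\<lambda>i. ip A f (v i)) v) (v j)"
      unfolding g_def ip_def by (simp add: algebra_simps sum_subtractf)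
    then show ?thesis using orthn_ip_lc[OF o _ that] that by simp
  qed
  have "ip A g g = 0"
  proof (rule ccontr)
    assume nz: "ip A g g \<noteq> 0"
    then have pos: "ip A g g > 0" using ip_self_nonneg[of A g] by linarith
    define s where "s = 1 / sqrt (ip A g g)"
    define w where "w = (\<lambda>i. if i < ?n then v i else (\<lambda>x. s * g x))"
    have "\<forall>i<Suc ?n. \<forall>j<Suc ?n. ip A (w i) (w j) = (if i = j then 1 else 0)"
    proof (intro allI impI)
      fix i j assume ij: "i < Suc ?n" "j < Suc ?n"
      have ss: "s * s * ip A g g = 1" using pos unfolding s_def
        by (simp add: field_simps)
      show "ip A (w i) (w j) = (if i = j then 1 else 0)"
      proof (cases "i < ?n")
        case True
        show ?thesis
        proof (cases "j < ?n")
          case True with \<open>i < ?n\<close> show ?thesis using o unfolding w_def orthn_def by auto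
        next
          case False
          then have "j = ?n" using ij by auto
          have "ip A (v i) (\<lambda>x. s * g x) = s * ip A g (v i)"
            unfolding ip_def by (simp add: sum_distrib_left algebra_simps)
          then show ?thesis using \<open>j = ?n\<close> True gv[OF True] unfolding w_def by simp
        qed
      next
        case False
        then have "i = ?n" using ij by auto
        show ?thesis
        proof (cases "j < ?n")
          case True
          have "ip A (\<lambda>x. s * g x) (v j) = s * ip A g (v j)"
            unfolding ip_def by (simp add: sum_distrib_left algebra_simps)
          then show ?thesis using \<open>i = ?n\<close> True gv[OF True] unfolding w_def by simp
        next
          case False
          then have "j = ?n" using ij by auto
          have "ip A (\<lambda>x. s * g x) (\<lambda>x. s * g x) = s * s * ip A g g"
            unfolding ip_def by (simp add: sum_distrib_left algebra_simps)
          then show ?thesis using \<open>i = ?n\<close> \<open>j = ?n\<close> ss unfolding w_def by simp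
        qed
      qed
    qed
    from ortho_bound[OF fA this] show False by simp
  qed
  from ip_self_zero[OF fA gl2 this] have "g = 0" .
  then show ?thesis unfolding g_def by (auto simp: fun_eq_iff)
qed




lemma l2_scale: "f \<in> l2 A \<Longrightarrow> (\<lambda>x. c * f x) \<in> l2 A"
  using l2D l2I by (metis mult_zero_right)

lemma opM_l2: "opM A M f \<in> l2 A" unfolding opM_def l2_def by auto

lemma ip_opM_sym:
  assumes "symm A M"
  shows "ip A (opM A M f) g = ip A f (opM A M g)"
proof -
  have "ip A (opM A M f) g = (\<Sum>x\<in>A. \<Sum>y\<in>A. M x y * f y * g x)"
    unfolding ip_def opM_def by (simp add: sum_distrib_right)
  also have "\<dots> = (\<Sum>y\<in>A. \<Sum>x\<in>A. M y x * f y * g x)"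
    by (subst sum.swap) (intro sum.cong refl, use assms in \<open>auto simp: symm_def\<close>)
  also have "\<dots> = ip A f (opM A M g)"
    unfolding ip_def opM_def by (simp add: sum_distrib_left algebra_simps)
  finally show ?thesis .
qed

lemma ip_lin_left: "ip A (\<lambda>x. a * f x + b * g x) k = a * ip A f k + b * ip A g k"
  unfolding ip_def by (simp add: algebra_simps sum.distrib sum_distrib_left)
lemma ip_lin_right: "ip A k (\<lambda>x. a * f x + b * g x) = a * ip A k f + b * ip A k g"
  unfolding ip_def by (simp add: algebra_simps sum.distrib sum_distrib_left)
lemma opM_lin: "opM A M (\<lambda>x. a * f x + b * g x) = (\<lambda>x. a * opM A M f x + b * opM A M g x)"
  unfolding opM_def by (auto simp: fun_eq_iff algebra_simps sum.distrib sum_distrib_left)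

lemma ip_cong: "(\<And>x. x \<in> A \<Longrightarrow> f x = f' x) \<Longrightarrow> (\<And>x. x \<in> A \<Longrightarrow> g x = g' x) \<Longrightarrow> ip A f g = ip A f' g'"
  unfolding ip_def by auto

lemma quad_zero:
  fixes a b :: real
  assumes "a \<ge> 0" "\<And>t. t > 0 \<Longrightarrow> 2 * t * a + t * t * b \<le> 0"
  shows "a = 0"
proof (rule ccontr)
  assume "a \<noteq> 0" then have a: "a > 0" using assms(1) by simp
  define t where "t = a / (\<bar>b\<bar> + 1)"
  have t: "t > 0" using a unfolding t_def by simp
  have "t * \<bar>b\<bar> \<le> a" unfolding t_def using a by (simp add: field_simps)
  then have 1: "t * (t * \<bar>b\<bar>) \<le> t * a" using t by (intro mult_left_mono) auto
  have 2: "t * t * (- \<bar>b\<bar>) \<le> t * t * b" using t by (intro mult_left_mono) auto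
  have 3: "t * a > 0" using t a by simp
  have "2 * t * a + t * t * b > 0" using 1 2 3 by (simp add: algebra_simps)
  with assms(2)[OF t] show False by simp
qed

lemma compact_box:
  "compact {g :: pt \<Rightarrow> real. \<forall>x. g x \<in> (if x \<in> A then {-1..1} else {0})}"
proof -
  have eq: "{g :: pt \<Rightarrow> real. \<forall>x. g x \<in> (if x \<in> A then {-1..1} else {0})}
        = PiE UNIV (\<lambda>x. if x \<in> A then {-1..1::real} else {0})"
    by (auto simp: PiE_def Pi_def extensional_def)
  have "compactin (product_topology (\<lambda>_. euclidean) UNIV) (PiE UNIV (\<lambda>x::pt. if x \<in> A then {-1..1::real} else {0}))"
    by (subst compactin_PiE) auto
  then show ?thesis unfolding eq by (simp add: euclidean_product_topology)
qed

lemma cont_ip: "continuous_on UNIV (\<lambda>g::pt \<Rightarrow> real. ip A g (w g))"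
  if "continuous_on UNIV w" for w
  unfolding ip_def
  by (intro continuous_on_sum continuous_on_mult continuous_on_product_coordinates continuous_on_product_then_coordinatewise[OF that])

lemma eigvec_exists:
  assumes fA: "finite A" and sy: "symm A M" and o: "orthn A v k"
    and ev: "\<forall>i<k. opM A M (v i) = fscale (lam i) (v i)"
    and f: "f \<in> l2 A" "f \<noteq> 0" "\<forall>i<k. ip A f (v i) = 0"
  shows "\<exists>g \<mu>. g \<in> l2 A \<and> ip A g g = 1 \<and> (\<forall>i<k. ip A g (v i) = 0) \<and> opM A M g = fscale \<mu> g"
proof -
  define q where "q = (\<lambda>g. ip A (opM A M g) g)"
  define S where "S = {g. g \<in> l2 A \<and> ip A g g = 1 \<and> (\<forall>i<k. ip A g (v i) = 0)}"
  define K where "K = {g :: pt \<Rightarrow> real. \<forall>x. g x \<in> (if x \<in> A then {-1..1} else {0})}"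
  have "S \<subseteq> K"
  proof
    fix g assume g: "g \<in> S"
    show "g \<in> K" unfolding K_def mem_Collect_eq
    proof (intro allI)
      fix x
      show "g x \<in> (if x \<in> A then {-1..1} else {0})"
      proof (cases "x \<in> A")
        case True
        have "g x * g x \<le> ip A g g" unfolding ip_def
          by (rule member_le_sum[OF True]) (auto simp: fA)
        then have "g x * g x \<le> 1" using g unfolding S_def by simp
        then have "(g x)^2 \<le> 1" by (simp add: power2_eq_square)
        then have "\<bar>g x\<bar> \<le> 1" by (simp add: abs_square_le_1)
        then show ?thesis using True by auto
      next
        case False then show ?thesis using g l2D[of g A x] unfolding S_def by simp
      qed
    qed
  qed
  have cS: "closed S"
  proof -
    have "l2 A = (\<Inter>x\<in>-A. {g. g x = 0})" using l2D l2I by blast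
    then have "S = (\<Inter>x\<in>-A. {g. g x = 0}) \<inter> {g. ip A g g = 1} \<inter> (\<Inter>i\<in>{..<k}. {g. ip A g (v i) = 0})"
      unfolding S_def by auto
    moreover have "closed (\<Inter>x\<in>-A. {g::pt\<Rightarrow>real. g x = 0})"
      by (intro closed_INT ballI closed_Collect_eq continuous_on_product_coordinates continuous_on_const)
    moreover have "closed {g. ip A g g = 1}"
      by (intro closed_Collect_eq cont_ip[of "\<lambda>g. g", OF continuous_on_id] continuous_on_const)
    moreover have "closed (\<Inter>i\<in>{..<k}. {g. ip A g (v i) = 0})"
      by (intro closed_INT ballI closed_Collect_eq cont_ip[of "\<lambda>_. v i" for i, OF continuous_on_const] continuous_on_const)
    ultimately show ?thesis by auto
  qed
  have compS: "compact S"
  proof -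
    have "compact (K \<inter> S)" using compact_Int_closed[OF compact_box[of A, folded K_def] cS] .
    then show ?thesis using \<open>S \<subseteq> K\<close> by (simp add: Int_absorb1)
  qed
  have ipf: "ip A f f > 0"
  proof -
    have "ip A f f \<noteq> 0" using ip_self_zero[OF fA f(1)] f(2) by auto
    then show ?thesis using ip_self_nonneg[of A f] by linarith
  qed
  define s where "s = 1 / sqrt (ip A f f)"
  have ss: "s * s * ip A f f = 1" using ipf unfolding s_def by (simp add: field_simps)
  have "(\<lambda>x. s * f x) \<in> S"
  proof -
    have "ip A (\<lambda>x. s * f x) (\<lambda>x. s * f x) = s * s * ip A f f"
      unfolding ip_def by (simp add: sum_distrib_left algebra_simps)
    moreover have "ip A (\<lambda>x. s * f x) (v i) = s * ip A f (v i)" for i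
      unfolding ip_def by (simp add: sum_distrib_left algebra_simps)
    ultimately show ?thesis using ss f l2_scale[OF f(1)] unfolding S_def by auto
  qed
  then have Sne: "S \<noteq> {}" by auto
  have qalt: "q g = (\<Sum>x\<in>A. (\<Sum>y\<in>A. M x y * g y) * g x)" for g
    unfolding q_def ip_def opM_def by simp
  have coord: "continuous_on S (\<lambda>g::pt\<Rightarrow>real. g x)" for x
    by (rule continuous_on_subset[OF continuous_on_product_coordinates]) simp
  have contq: "continuous_on S q"
    unfolding qalt
    by (intro continuous_on_sum continuous_on_mult continuous_on_const coord)
  obtain g where gS: "g \<in> S" and gmax: "\<forall>h\<in>S. q h \<le> q g"
    using continuous_attains_sup[OF compS Sne contq] by blast
  define \<mu> where "\<mu> = q g"
  have gl2: "g \<in> l2 A" using gS unfolding S_def l2_def by auto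
  have g1: "ip A g g = 1" and gv: "\<forall>i<k. ip A g (v i) = 0" using gS unfolding S_def by auto
  have H: "q h \<le> \<mu> * ip A h h" if h: "h \<in> l2 A" "\<forall>i<k. ip A h (v i) = 0" for h
  proof (cases "ip A h h = 0")
    case True
    then have "h = 0" using ip_self_zero[OF fA h(1)] by simp
    then show ?thesis unfolding q_def ip_def by simp
  next
    case False
    then have pos: "ip A h h > 0" using ip_self_nonneg[of A h] by linarith
    define r where "r = 1 / sqrt (ip A h h)"
    have rr: "r * r * ip A h h = 1" using pos unfolding r_def by (simp add: field_simps)
    have r0: "r > 0" using pos unfolding r_def by simp
    have "(\<lambda>x. r * h x) \<in> S"
    proof -
      have "ip A (\<lambda>x. r * h x) (\<lambda>x. r * h x) = r * r * ip A h h"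
        unfolding ip_def by (simp add: sum_distrib_left algebra_simps)
      moreover have "ip A (\<lambda>x. r * h x) (v i) = r * ip A h (v i)" for i
        unfolding ip_def by (simp add: sum_distrib_left algebra_simps)
      ultimately show ?thesis using rr h l2_scale[OF h(1)] unfolding S_def by auto
    qed
    then have le: "q (\<lambda>x. r * h x) \<le> \<mu>" using gmax unfolding \<mu>_def by auto
    have "q (\<lambda>x. r * h x) = r * r * q h"
      unfolding qalt by (simp add: sum_distrib_left algebra_simps)
    with le have "r * r * q h \<le> \<mu> * (r * r * ip A h h)" using rr by simp
    then have "r * r * q h \<le> r * r * (\<mu> * ip A h h)" by (simp add: algebra_simps)
    then show ?thesis using r0 by (simp add: mult_le_cancel_left)
  qed
  define h where "h = (\<lambda>x. 1 * opM A M g x + (- \<mu>) * g x)"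
  have hl2: "h \<in> l2 A" unfolding h_def using l2D[OF gl2] l2D[OF opM_l2] by (intro l2I) auto
  have hv: "\<forall>i<k. ip A h (v i) = 0"
  proof (intro allI impI)
    fix i assume i: "i < k"
    have "ip A (opM A M g) (v i) = ip A g (opM A M (v i))" by (rule ip_opM_sym[OF sy])
    also have "\<dots> = lam i * ip A g (v i)" using ev i unfolding ip_def fscale_def
      by (simp add: sum_distrib_left algebra_simps)
    finally have "ip A (opM A M g) (v i) = 0" using gv i by simp
    then show "ip A h (v i) = 0" unfolding h_def ip_lin_left using gv i by simp
  qed
  have key: "2 * t * ip A h h + t * t * (q h - \<mu> * ip A h h) \<le> 0" if "t > 0" for t
  proof -
    define f' where "f' = (\<lambda>x. 1 * g x + t * h x)"
    have "f' \<in> l2 A" unfolding f'_def using l2D[OF gl2] l2D[OF hl2] by (intro l2I) auto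
    moreover have "\<forall>i<k. ip A f' (v i) = 0" unfolding f'_def ip_lin_left using gv hv by simp
    ultimately have le: "q f' \<le> \<mu> * ip A f' f'" by (rule H)
    have qf': "q f' = q g + t * (ip A (opM A M g) h + ip A (opM A M h) g) + t * t * q h"
      unfolding q_def f'_def opM_lin ip_lin_left ip_lin_right by (simp add: algebra_simps)
    have sym1: "ip A (opM A M h) g = ip A (opM A M g) h"
      using ip_opM_sym[OF sy, of h g] ip_sym[of A h "opM A M g"] by simp
    have ipf': "ip A f' f' = 1 + 2 * t * ip A g h + t * t * ip A h h"
      unfolding f'_def ip_lin_left ip_lin_right using g1 ip_sym[of A g h] by (simp add: algebra_simps)
    have hh: "ip A h h = ip A (opM A M g) h - \<mu> * ip A g h"
      by (subst (1) h_def, simp only: ip_lin_left)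
    have hh': "ip A (opM A M g) h = ip A h h + \<mu> * ip A g h" using hh by simp
    have mu': "q g = \<mu>" unfolding \<mu>_def ..
    have "q f' - \<mu> * ip A f' f' = 2 * t * ip A h h + t * t * (q h - \<mu> * ip A h h)"
      unfolding qf' ipf' sym1 hh' mu' by (simp add: algebra_simps)
    then show ?thesis using le by linarith
  qed
  have "ip A h h = 0"
    using quad_zero[of "ip A h h" "q h - \<mu> * ip A h h"] key ip_self_nonneg[of A h] by blast
  then have "h = 0" using ip_self_zero[OF fA hl2] by simp
  then have "opM A M g = fscale \<mu> g"
    unfolding h_def fscale_def by (auto simp: fun_eq_iff)
  then show ?thesis using gl2 g1 gv by blast
qed




lemma spectral:
  assumes fA: "finite A" and sy: "symm A M"
  shows "\<exists>v lam. ONB A M v lam (card A)"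
proof -
  have "k \<le> card A \<Longrightarrow> \<exists>v lam. ONB A M v lam k" for k
  proof (induction k)
    case 0
    show ?case by (auto simp: ONB_def orthn_def)
  next
    case (Suc k)
    then obtain v lam where o: "ONB A M v lam k" by auto
    have "card {..<k} < card A" using Suc.prems by simp
    from underdet[OF finite_lessThan fA this, of "\<lambda>i x. v i x"] obtain c where
      c: "\<forall>i. i \<notin> A \<longrightarrow> c i = 0" "\<exists>i\<in>A. c i \<noteq> 0" "\<forall>j\<in>{..<k}. (\<Sum>i\<in>A. v j i * c i) = 0"
      by blast
    have cl2: "c \<in> l2 A" using c(1) by (intro l2I) auto
    have c0: "c \<noteq> 0" using c(2) by auto
    have cv: "\<forall>i<k. ip A c (v i) = 0" using c(3) unfolding ip_def by (simp add: mult.commute)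
    have ok: "orthn A v k" "\<forall>i<k. opM A M (v i) = fscale (lam i) (v i)" using o unfolding ONB_def by auto
    from eigvec_exists[OF fA sy ok cl2 c0 cv] obtain g \<mu> where
      g: "g \<in> l2 A" "ip A g g = 1" "\<forall>i<k. ip A g (v i) = 0" "opM A M g = fscale \<mu> g" by blast
    define v' where "v' = v(k := g)"
    define lam' where "lam' = lam(k := \<mu>)"
    have "ONB A M v' lam' (Suc k)"
      unfolding ONB_def orthn_def
    proof (intro conjI allI impI)
      fix i assume "i < Suc k"
      then show "v' i \<in> l2 A" using ok g unfolding v'_def orthn_def by (cases "i = k") auto
      show "opM A M (v' i) = fscale (lam' i) (v' i)" using ok g \<open>i < Suc k\<close>
        unfolding v'_def lam'_def by (cases "i = k") auto
    next
      fix i j assume ij: "i < Suc k" "j < Suc k"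
      have gv2: "\<forall>i<k. ip A (v i) g = 0" using g(3) ip_sym[of A g] by simp
      show "ip A (v' i) (v' j) = (if i = j then 1 else 0)"
      proof (cases "i = k")
        case True
        then show ?thesis using ij g gv2 unfolding v'_def by (cases "j = k") auto
      next
        case False
        then show ?thesis using ij g gv2 ok unfolding v'_def orthn_def by (cases "j = k") auto
      qed
    qed
    then show ?case by blast
  qed
  then show ?thesis by blast
qed

lemma l2_add: "f \<in> l2 A \<Longrightarrow> g \<in> l2 A \<Longrightarrow> f + g \<in> l2 A"
  by (rule l2I) (simp add: l2D)

lemma fsum_apply: "(\<Sum>i\<in>I. F i) x = (\<Sum>i\<in>I. F i x)" for F :: "'i \<Rightarrow> pt \<Rightarrow> real"
  by (induction I rule: infinite_finite_induct) auto

lemma lc_as_sum: "lc I c v = (\<Sum>i\<in>I. fscale (c i) (v i))"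
  unfolding lc_def fscale_def by (auto simp: fun_eq_iff fsum_apply)

interpretation fs: vector_space fscale
  by unfold_locales (auto simp: fscale_def fun_eq_iff algebra_simps)

lemma opM_lc: "finite I \<Longrightarrow> opM A M (lc I c v) = lc I c (\<lambda>i. opM A M (v i))"
  unfolding opM_def lc_def by (auto simp: fun_eq_iff sum_distrib_left sum.swap[of _ A] algebra_simps)

lemma ONB_opM_lc:
  assumes "ONB A M v lam n" "I \<subseteq> {..<n}"
  shows "opM A M (lc I c v) = lc I (\<lambda>i. c i * lam i) v"
proof -
  have fI: "finite I" using assms(2) finite_subset by blast
  show ?thesis unfolding opM_lc[OF fI] using assms unfolding ONB_def lc_def fscale_def
    by (auto simp: fun_eq_iff intro!: sum.cong)
qed

lemma orthn_ip_lc_lc: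
  assumes "orthn A v n" "I \<subseteq> {..<n}"
  shows "ip A (lc I c v) (lc I d v) = (\<Sum>i\<in>I. c i * d i)"
proof -
  have fI: "finite I" using assms(2) finite_subset by blast
  have "ip A (lc I c v) (lc I d v) = (\<Sum>i\<in>I. c i * ip A (v i) (lc I d v))"
    by (rule ip_lc_left[OF fI])
  also have "\<dots> = (\<Sum>i\<in>I. c i * ip A (lc I d v) (v i))"
    by (intro sum.cong refl arg_cong2[where f="(*)"] ip_sym)
  also have "\<dots> = (\<Sum>i\<in>I. c i * d i)"
    using orthn_ip_lc[OF assms(1,2)] assms(2) by (intro sum.cong) auto
  finally show ?thesis .
qed

lemma ONB_inj: assumes "orthn A v n" shows "inj_on v {..<n}"
proof (rule inj_onI)
  fix i j assume ij: "i \<in> {..<n}" "j \<in> {..<n}" "v i = v j"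
  show "i = j"
  proof (rule ccontr)
    assume "i \<noteq> j"
    then have "ip A (v i) (v j) = 0" using assms ij(1,2) unfolding orthn_def by auto
    moreover have "ip A (v i) (v i) = 1" using assms ij(1,2) unfolding orthn_def by auto
    ultimately show False using ij by simp
  qed
qed

lemma eigenspace_span:
  assumes fA: "finite A" and sy: "symm A M" and o: "ONB A M v lam (card A)"
  shows "eigenspace A (opM A M) \<mu> = fs.span (v ` {i. i < card A \<and> lam i = \<mu>})"
proof -
  let ?n = "card A"
  let ?I = "{i. i < card A \<and> lam i = \<mu>}"
  have oo: "orthn A v ?n" using o unfolding ONB_def by auto
  have ev: "\<forall>i<?n. opM A M (v i) = fscale (lam i) (v i)" using o unfolding ONB_def by auto
  have fI: "finite ?I" by auto
  show ?thesis
  proof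
    show "eigenspace A (opM A M) \<mu> \<subseteq> fs.span (v ` ?I)"
    proof
      fix f assume f: "f \<in> eigenspace A (opM A M) \<mu>"
      then have fl2: "f \<in> l2 A" and fe: "opM A M f = fscale \<mu> f" unfolding eigenspace_def by auto
      have z: "ip A f (v i) = 0" if "i < ?n" "lam i \<noteq> \<mu>" for i
      proof -
        have "\<mu> * ip A f (v i) = ip A (opM A M f) (v i)" using fe unfolding ip_def fscale_def
          by (simp add: sum_distrib_left algebra_simps)
        also have "\<dots> = ip A f (opM A M (v i))" by (rule ip_opM_sym[OF sy])
        also have "\<dots> = lam i * ip A f (v i)" using ev that unfolding ip_def fscale_def
          by (simp add: sum_distrib_left algebra_simps)
        finally show ?thesis using that by simp
      qed
      have "f = lc {..<?n} (\<lambda>i. ip A f (v i)) v" by (rule expansion[OF fA oo fl2])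
      also have "\<dots> = lc ?I (\<lambda>i. ip A f (v i)) v"
        unfolding lc_def
      proof (rule ext, rule sum.mono_neutral_right)
        fix x show "\<forall>i\<in>{..<?n} - ?I. ip A f (v i) * v i x = 0" using z by auto
      qed auto
      also have "\<dots> \<in> fs.span (v ` ?I)"
        unfolding lc_as_sum by (intro fs.span_sum fs.span_scale fs.span_base) auto
      finally show "f \<in> fs.span (v ` ?I)" .
    qed
  next
    have sub: "fs.subspace (eigenspace A (opM A M) \<mu>)"
      unfolding fs.subspace_def eigenspace_def
    proof (intro conjI ballI allI)
      show "0 \<in> {f \<in> l2 A. opM A M f = fscale \<mu> f}"
        by (auto simp: l2_def opM_def fscale_def fun_eq_iff)
    next
      fix f g assume f: "f \<in> {f \<in> l2 A. opM A M f = fscale \<mu> f}" and g: "g \<in> {f \<in> l2 A. opM A M f = fscale \<mu> f}"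
      have "opM A M (f + g) = opM A M (\<lambda>x. 1 * f x + 1 * g x)" by (simp add: plus_fun_def)
      also have "\<dots> = fscale \<mu> (f + g)" unfolding opM_lin using f g
        by (auto simp: fscale_def fun_eq_iff algebra_simps dest: fun_cong)
      finally show "f + g \<in> {f \<in> l2 A. opM A M f = fscale \<mu> f}"
        using f g l2_add by auto
    next
      fix c f assume f: "f \<in> {f \<in> l2 A. opM A M f = fscale \<mu> f}"
      have "opM A M (fscale c f) = opM A M (\<lambda>x. c * f x + 0 * f x)" by (simp add: fscale_def)
      also have "\<dots> = fscale \<mu> (fscale c f)" unfolding opM_lin using f
        by (auto simp: fscale_def fun_eq_iff algebra_simps dest: fun_cong)
      finally show "fscale c f \<in> {f \<in> l2 A. opM A M f = fscale \<mu> f}"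
        using f l2_scale[of f A c] by (auto simp: fscale_def)
    qed
    have "v ` ?I \<subseteq> eigenspace A (opM A M) \<mu>"
      using ev oo unfolding eigenspace_def orthn_def by auto
    then show "fs.span (v ` ?I) \<subseteq> eigenspace A (opM A M) \<mu>"
      by (rule fs.span_minimal[OF _ sub])
  qed
qed

lemma indep_ONB:
  assumes o: "orthn A v n" and I: "I \<subseteq> {..<n}"
  shows "fs.independent (v ` I)"
proof -
  have fI: "finite I" using I finite_subset by blast
  have inj: "inj_on v I" using ONB_inj[OF o] I inj_on_subset by blast
  show ?thesis
  proof (rule fs.independent_if_scalars_zero)
    show "finite (v ` I)" using fI by simp
  next
    fix f x assume s: "(\<Sum>x\<in>v ` I. fscale (f x) x) = 0" and x: "x \<in> v ` I"
    then obtain j where j: "j \<in> I" "x = v j" by auto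
    have "(\<Sum>x\<in>v ` I. fscale (f x) x) = lc I (\<lambda>i. f (v i)) v"
      unfolding lc_as_sum by (simp add: sum.reindex[OF inj])
    then have "lc I (\<lambda>i. f (v i)) v = 0" using s by simp
    then have "ip A (lc I (\<lambda>i. f (v i)) v) (v j) = 0" unfolding ip_def by simp
    then show "f x = 0" using orthn_ip_lc[OF o I, of j "\<lambda>i. f (v i)"] j I by auto
  qed
qed

lemma Ncount_ONB:
  assumes fA: "finite A" and sy: "symm A M" and o: "ONB A M v lam (card A)"
  shows "Ncount E A (opM A M) = card {i. i < card A \<and> lam i \<le> E}"
proof -
  let ?n = "card A"
  have oo: "orthn A v ?n" using o unfolding ONB_def by auto
  have ev: "\<forall>i<?n. opM A M (v i) = fscale (lam i) (v i)" using o unfolding ONB_def by auto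
  have dimeq: "fs.dim (eigenspace A (opM A M) \<mu>) = card {i. i < ?n \<and> lam i = \<mu>}" for \<mu>
  proof -
    have sub: "{i. i < ?n \<and> lam i = \<mu>} \<subseteq> {..<?n}" by auto
    have inj: "inj_on v {i. i < ?n \<and> lam i = \<mu>}" using ONB_inj[OF oo] inj_on_subset sub by blast
    show ?thesis unfolding eigenspace_span[OF fA sy o]
      using fs.dim_span_eq_card_independent[OF indep_ONB[OF oo sub]] card_image[OF inj] by simp
  qed
  have iseig: "is_eigenvalue A (opM A M) \<mu> \<longleftrightarrow> (\<exists>i<?n. lam i = \<mu>)" for \<mu>
  proof
    assume "is_eigenvalue A (opM A M) \<mu>"
    then obtain f where f: "f \<in> eigenspace A (opM A M) \<mu>" "f \<noteq> 0" unfolding is_eigenvalue_def by auto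
    show "\<exists>i<?n. lam i = \<mu>"
    proof (rule ccontr)
      assume "\<not> (\<exists>i<?n. lam i = \<mu>)"
      then have e: "{i. i < ?n \<and> lam i = \<mu>} = {}" by auto
      have "f \<in> fs.span (v ` {i. i < ?n \<and> lam i = \<mu>})" using f(1) by (simp only: eigenspace_span[OF fA sy o])
      then have "f \<in> fs.span {}" unfolding e by simp
      then show False using f(2) by simp
    qed
  next
    assume "\<exists>i<?n. lam i = \<mu>"
    then obtain i where i: "i < ?n" "lam i = \<mu>" by auto
    have "v i \<in> eigenspace A (opM A M) \<mu>" using ev oo i unfolding eigenspace_def orthn_def by auto
    moreover have "ip A (v i) (v i) = 1" using oo i unfolding orthn_def by auto
    then have "v i \<noteq> 0" unfolding ip_def by auto
    ultimately show "is_eigenvalue A (opM A M) \<mu>" unfolding is_eigenvalue_def by blast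
  qed
  let ?P = "{i. i < ?n \<and> lam i \<le> E}"
  have setq: "{\<mu>. is_eigenvalue A (opM A M) \<mu> \<and> \<mu> \<le> E} = lam ` ?P"
    unfolding iseig by auto
  have "Ncount E A (opM A M) = (\<Sum>\<mu>\<in>lam ` ?P. card {i. i < ?n \<and> lam i = \<mu>})"
    unfolding Ncount_def setq dimeq ..
  also have "\<dots> = (\<Sum>\<mu>\<in>lam ` ?P. card {i. i \<in> ?P \<and> lam i = \<mu>})"
    by (intro sum.cong refl arg_cong[where f = card]) auto
  also have "\<dots> = card ?P"
    using sum.image_gen[of ?P "\<lambda>_. 1::nat" lam] by simp
  finally show ?thesis .
qed




lemma ip_supp:
  assumes "finite A" "C \<subseteq> A" "f \<in> l2 C"
  shows "ip A f g = ip C f g"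
  unfolding ip_def using assms l2D[OF assms(3)]
  by (intro sum.mono_neutral_right) auto

lemma qf_restrict:
  assumes fA: "finite A" and C: "C \<subseteq> A" and f: "f \<in> l2 C"
  shows "ip A (opM A M f) f = (\<Sum>x\<in>C. \<Sum>y\<in>C. M x y * f y * f x)"
proof -
  have "ip A (opM A M f) f = (\<Sum>x\<in>A. (\<Sum>y\<in>A. M x y * f y) * f x)"
    unfolding ip_def opM_def by simp
  also have "\<dots> = (\<Sum>x\<in>C. (\<Sum>y\<in>A. M x y * f y) * f x)"
    using fA C l2D[OF f] by (intro sum.mono_neutral_right) auto
  also have "\<dots> = (\<Sum>x\<in>C. (\<Sum>y\<in>C. M x y * f y) * f x)"
  proof -
    have inner: "(\<Sum>y\<in>A. M x y * f y) = (\<Sum>y\<in>C. M x y * f y)" for x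
      using fA C l2D[OF f] by (intro sum.mono_neutral_right) auto
    show ?thesis by (simp only: inner)
  qed
  also have "\<dots> = (\<Sum>x\<in>C. \<Sum>y\<in>C. M x y * f y * f x)" by (simp add: sum_distrib_right)
  finally show ?thesis .
qed

lemma compare:
  assumes fA: "finite A" and fB: "finite B" and syA: "symm A M" and syB: "symm B M'"
    and CA: "C \<subseteq> A" and CB: "C \<subseteq> B" and eq: "\<forall>x\<in>C. \<forall>y\<in>C. M x y = M' x y"
  shows "Ncount E A (opM A M) \<le> Ncount E B (opM B M') + card (A - C)"
proof -
  obtain v lam where o: "ONB A M v lam (card A)" using spectral[OF fA syA] by blast
  obtain u mu where ou: "ONB B M' u mu (card B)" using spectral[OF fB syB] by blast
  let ?n = "card A" and ?m = "card B"
  let ?P = "{i. i < ?n \<and> lam i \<le> E}" and ?R = "{j. j < ?m \<and> mu j \<le> E}"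
  have ov: "orthn A v ?n" and ovu: "orthn B u ?m" using o ou unfolding ONB_def by auto
  have NA: "Ncount E A (opM A M) = card ?P" by (rule Ncount_ONB[OF fA syA o])
  have NB: "Ncount E B (opM B M') = card ?R" by (rule Ncount_ONB[OF fB syB ou])
  have "card ?P \<le> card ?R + card (A - C)"
  proof (rule ccontr)
    assume "\<not> ?thesis"
    then have lt: "card ((A - C) <+> ?R) < card ?P"
      using fA by (simp add: card_Plus)
    define a where "a = (\<lambda>e i. case e of Inl x \<Rightarrow> v i x | Inr j \<Rightarrow> ip B (v i) (u j))"
    have fJ: "finite ((A - C) <+> ?R)" using fA by auto
    from underdet[OF fJ _ lt, of a] obtain c where
      c: "\<forall>i. i \<notin> ?P \<longrightarrow> c i = 0" "\<exists>i\<in>?P. c i \<noteq> 0"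
         "\<forall>e\<in>(A - C) <+> ?R. (\<Sum>i\<in>?P. a e i * c i) = 0" by auto
    define f where "f = lc ?P c v"
    have Psub: "?P \<subseteq> {..<?n}" by auto
    have fPf: "finite ?P" by auto
    have fl2A: "f \<in> l2 A" unfolding f_def using ov by (intro lc_l2) (auto simp: orthn_def)
    have fC: "f \<in> l2 C"
    proof (rule l2I)
      fix x assume x: "x \<notin> C"
      show "f x = 0"
      proof (cases "x \<in> A")
        case True
        then have "Inl x \<in> (A - C) <+> ?R" using x by auto
        from c(3)[rule_format, OF this] have "(\<Sum>i\<in>?P. v i x * c i) = 0" unfolding a_def by simp
        then show ?thesis unfolding f_def lc_def by (simp add: mult.commute)
      next
        case False then show ?thesis using l2D[OF fl2A] by simp
      qed
    qed
    have fl2B: "f \<in> l2 B" using fC CB l2D l2I by blast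
    have fu: "ip B f (u j) = 0" if "j \<in> ?R" for j
    proof -
      have "Inr j \<in> (A - C) <+> ?R" using that by auto
      from c(3)[rule_format, OF this] have "(\<Sum>i\<in>?P. ip B (v i) (u j) * c i) = 0" unfolding a_def by simp
      then show ?thesis unfolding f_def ip_lc_left[OF fPf] by (simp add: mult.commute)
    qed
    have ipA: "ip A f f = (\<Sum>i\<in>?P. c i * c i)" unfolding f_def by (rule orthn_ip_lc_lc[OF ov Psub])
    have pos: "ip A f f > 0"
    proof -
      obtain i0 where i0: "i0 \<in> ?P" "c i0 \<noteq> 0" using c(2) by auto
      have "c i0 * c i0 > 0" using i0(2) not_real_square_gt_zero by blast
      moreover have "c i0 * c i0 \<le> (\<Sum>i\<in>?P. c i * c i)"
        by (rule member_le_sum[OF i0(1)]) auto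
      ultimately show ?thesis unfolding ipA by linarith
    qed
    have qA: "ip A (opM A M f) f = (\<Sum>i\<in>?P. lam i * (c i * c i))"
    proof -
      have "ip A (opM A M f) f = ip A (lc ?P (\<lambda>i. c i * lam i) v) (lc ?P c v)"
        unfolding f_def ONB_opM_lc[OF o Psub] ..
      also have "\<dots> = (\<Sum>i\<in>?P. c i * lam i * c i)" by (rule orthn_ip_lc_lc[OF ov Psub])
      finally show ?thesis by (simp add: algebra_simps)
    qed
    have qA_le: "ip A (opM A M f) f \<le> E * ip A f f"
    proof -
      have "(\<Sum>i\<in>?P. lam i * (c i * c i)) \<le> (\<Sum>i\<in>?P. E * (c i * c i))"
        by (intro sum_mono mult_right_mono) auto
      then show ?thesis unfolding qA ipA by (simp add: sum_distrib_left)
    qed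
    define d where "d = (\<lambda>j. ip B f (u j))"
    have fexp: "f = lc {..<?m} d u" unfolding d_def by (rule expansion[OF fB ovu fl2B])
    have ipB: "ip B f f = (\<Sum>j<?m. d j * d j)"
      by (subst (1 2) fexp, rule orthn_ip_lc_lc[OF ovu]) auto
    have qB: "ip B (opM B M' f) f = (\<Sum>j<?m. mu j * (d j * d j))"
    proof -
      have "ip B (opM B M' f) f = ip B (lc {..<?m} (\<lambda>j. d j * mu j) u) (lc {..<?m} d u)"
        by (subst (1 2) fexp, subst ONB_opM_lc[OF ou]) auto
      also have "\<dots> = (\<Sum>j<?m. d j * mu j * d j)" by (rule orthn_ip_lc_lc[OF ovu]) auto
      finally show ?thesis by (simp add: algebra_simps)
    qed
    have ipAB: "ip A f f = ip B f f" using ip_supp[OF fA CA fC] ip_supp[OF fB CB fC] by simp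
    have qB_gt: "ip B (opM B M' f) f > E * ip B f f"
    proof -
      have dz: "d j = 0" if "j < ?m" "mu j \<le> E" for j using fu that unfolding d_def by auto
      have "\<exists>j<?m. d j \<noteq> 0"
      proof (rule ccontr)
        assume "\<not> ?thesis"
        then have "ip B f f = 0" unfolding ipB by simp
        then show False using pos ipAB by simp
      qed
      then obtain j0 where j0: "j0 < ?m" "d j0 \<noteq> 0" by auto
      have mj0: "mu j0 > E" using dz j0 by force
      have "(\<Sum>j<?m. mu j * (d j * d j) - E * (d j * d j)) > 0"
      proof -
        have "\<forall>j\<in>{..<?m}. mu j * (d j * d j) - E * (d j * d j) \<ge> 0"
        proof
          fix j assume j: "j \<in> {..<?m}"
          show "mu j * (d j * d j) - E * (d j * d j) \<ge> 0"
          proof (cases "mu j \<le> E")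
            case True then show ?thesis using dz j by simp
          next
            case False
            then have "(mu j - E) * (d j * d j) \<ge> 0" by simp
            then show ?thesis by (simp add: algebra_simps)
          qed
        qed
        moreover have "mu j0 * (d j0 * d j0) - E * (d j0 * d j0) > 0"
        proof -
          have "d j0 * d j0 > 0" using j0(2) not_real_square_gt_zero by blast
          then have "(mu j0 - E) * (d j0 * d j0) > 0" using mj0 by simp
          then show ?thesis by (simp add: algebra_simps)
        qed
        ultimately show ?thesis
          using sum_pos2[of "{..<?m}" j0 "\<lambda>j. mu j * (d j * d j) - E * (d j * d j)"] j0 by auto
      qed
      then show ?thesis unfolding qB ipB by (simp add: sum_subtractf sum_distrib_left)
    qed
    have "ip A (opM A M f) f = ip B (opM B M' f) f"
      unfolding qf_restrict[OF fA CA fC] qf_restrict[OF fB CB fC] using eq by simp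
    then show False using qA_le qB_gt ipAB by simp
  qed
  then show ?thesis unfolding NA NB .
qed




lemma l2_mono: "f \<in> l2 A \<Longrightarrow> A \<subseteq> B \<Longrightarrow> f \<in> l2 B"
  using l2D l2I by blast

lemma opM_ext:
  assumes fin: "finite A1" "finite A2" and disj: "A1 \<inter> A2 = {}" and f: "f \<in> l2 A1"
    and cross: "\<forall>x\<in>A2. \<forall>y\<in>A1. M x y = 0"
  shows "opM (A1 \<union> A2) M f = opM A1 M f"
proof (rule ext)
  fix x
  have s: "(\<Sum>y\<in>A1 \<union> A2. M x y * f y) = (\<Sum>y\<in>A1. M x y * f y) + (\<Sum>y\<in>A2. M x y * f y)"
    using fin disj by (rule sum.union_disjoint)
  have z2: "(\<Sum>y\<in>A2. M x y * f y) = 0" using disj l2D[OF f] by (intro sum.neutral) auto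
  show "opM (A1 \<union> A2) M f x = opM A1 M f x"
  proof (cases "x \<in> A1")
    case True then show ?thesis unfolding opM_def s z2 by simp
  next
    case False
    show ?thesis
    proof (cases "x \<in> A2")
      case True
      have "(\<Sum>y\<in>A1. M x y * f y) = 0" using cross True by (intro sum.neutral) auto
      then show ?thesis unfolding opM_def s z2 using False by simp
    next
      case False2: False
      then show ?thesis unfolding opM_def using False by simp
    qed
  qed
qed

lemma ip_union: "finite A1 \<Longrightarrow> finite A2 \<Longrightarrow> A1 \<inter> A2 = {} \<Longrightarrow> ip (A1 \<union> A2) f g = ip A1 f g + ip A2 f g"
  unfolding ip_def by (rule sum.union_disjoint)

lemma ip_cross: "f \<in> l2 A1 \<Longrightarrow> g \<in> l2 A2 \<Longrightarrow> A1 \<inter> A2 = {} \<Longrightarrow> ip (A1 \<union> A2) f g = 0"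
  unfolding ip_def using l2D[of f A1] l2D[of g A2] by (intro sum.neutral) (metis IntI empty_iff mult_zero_left mult_zero_right)

lemma block:
  assumes fin: "finite A1" "finite A2" and disj: "A1 \<inter> A2 = {}" and sy: "symm (A1 \<union> A2) M"
    and cross: "\<forall>x\<in>A1. \<forall>y\<in>A2. M x y = 0 \<and> M y x = 0"
  shows "Ncount E (A1 \<union> A2) (opM (A1 \<union> A2) M) = Ncount E A1 (opM A1 M) + Ncount E A2 (opM A2 M)"
proof -
  have sy1: "symm A1 M" and sy2: "symm A2 M" using sy unfolding symm_def by auto
  obtain v lam where o1: "ONB A1 M v lam (card A1)" using spectral[OF fin(1) sy1] by blast
  obtain u mu where o2: "ONB A2 M u mu (card A2)" using spectral[OF fin(2) sy2] by blast
  let ?n1 = "card A1" and ?n2 = "card A2"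
  have ov: "orthn A1 v ?n1" and ou: "orthn A2 u ?n2" using o1 o2 unfolding ONB_def by auto
  define w where "w = (\<lambda>i. if i < ?n1 then v i else u (i - ?n1))"
  define lam' where "lam' = (\<lambda>i. if i < ?n1 then lam i else mu (i - ?n1))"
  have fU: "finite (A1 \<union> A2)" using fin by simp
  have symU: "symm (A1 \<union> A2) M" by (rule sy)
  have cardU: "card (A1 \<union> A2) = ?n1 + ?n2" using fin disj by (simp add: card_Un_disjoint)
  have disj2: "A2 \<inter> A1 = {}" using disj by auto
  have ext1: "opM (A1 \<union> A2) M f = opM A1 M f" if "f \<in> l2 A1" for f
    using opM_ext[OF fin disj that] cross by auto
  have ext2: "opM (A1 \<union> A2) M f = opM A2 M f" if "f \<in> l2 A2" for f
    using opM_ext[OF fin(2,1) disj2 that] cross by (auto simp: Un_commute)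
  have ipU: "ip (A1 \<union> A2) f g = ip A1 f g" if "f \<in> l2 A1" for f g
    by (rule ip_supp[OF fU _ that]) auto
  have ipU2: "ip (A1 \<union> A2) f g = ip A2 f g" if "f \<in> l2 A2" for f g
    by (rule ip_supp[OF fU _ that]) auto
  have vl2: "v i \<in> l2 A1" if "i < ?n1" for i using ov that unfolding orthn_def by auto
  have ul2: "u i \<in> l2 A2" if "i < ?n2" for i using ou that unfolding orthn_def by auto
  have "ONB (A1 \<union> A2) M w lam' (?n1 + ?n2)"
    unfolding ONB_def orthn_def
  proof (intro conjI allI impI)
    fix i assume i: "i < ?n1 + ?n2"
    show "w i \<in> l2 (A1 \<union> A2)"
    proof (cases "i < ?n1")
      case True then show ?thesis using l2_mono[OF vl2[OF True]] unfolding w_def by auto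
    next
      case False
      then have j: "i - ?n1 < ?n2" using i by auto
      then show ?thesis using l2_mono[OF ul2[OF j]] False unfolding w_def by auto
    qed
    show "opM (A1 \<union> A2) M (w i) = fscale (lam' i) (w i)"
    proof (cases "i < ?n1")
      case True then show ?thesis using ext1[OF vl2[OF True]] o1 unfolding w_def lam'_def ONB_def by auto
    next
      case False
      then have j: "i - ?n1 < ?n2" using i by auto
      then show ?thesis using ext2[OF ul2[OF j]] o2 False unfolding w_def lam'_def ONB_def by auto
    qed
  next
    fix i j assume i: "i < ?n1 + ?n2" and j: "j < ?n1 + ?n2"
    show "ip (A1 \<union> A2) (w i) (w j) = (if i = j then 1 else 0)"
    proof (cases "i < ?n1")
      case True
      show ?thesis
      proof (cases "j < ?n1")
        case True2: True
        then show ?thesis using True ipU[OF vl2[OF True]] ov unfolding w_def orthn_def by auto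
      next
        case False
        then have j': "j - ?n1 < ?n2" using j by auto
        have "ip (A1 \<union> A2) (v i) (u (j - ?n1)) = 0" by (rule ip_cross[OF vl2[OF True] ul2[OF j'] disj])
        then show ?thesis using True False unfolding w_def by auto
      qed
    next
      case False
      then have i': "i - ?n1 < ?n2" using i by auto
      show ?thesis
      proof (cases "j < ?n1")
        case True
        have "ip (A2 \<union> A1) (u (i - ?n1)) (v j) = 0" by (rule ip_cross[OF ul2[OF i'] vl2[OF True] disj2])
        then show ?thesis using True False unfolding w_def by (auto simp: Un_commute)
      next
        case False2: False
        then have j': "j - ?n1 < ?n2" using j by auto
        have "ip (A1 \<union> A2) (u (i - ?n1)) (u (j - ?n1)) = ip A2 (u (i - ?n1)) (u (j - ?n1))"
          by (rule ipU2[OF ul2[OF i']])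
        then show ?thesis using False False2 ou i' j' unfolding w_def orthn_def by auto
      qed
    qed
  qed
  then have oU: "ONB (A1 \<union> A2) M w lam' (card (A1 \<union> A2))" unfolding cardU .
  have NU: "Ncount E (A1 \<union> A2) (opM (A1 \<union> A2) M) = card {i. i < card (A1 \<union> A2) \<and> lam' i \<le> E}"
    by (rule Ncount_ONB[OF fU symU oU])
  have N1: "Ncount E A1 (opM A1 M) = card {i. i < ?n1 \<and> lam i \<le> E}" by (rule Ncount_ONB[OF fin(1) sy1 o1])
  have N2: "Ncount E A2 (opM A2 M) = card {i. i < ?n2 \<and> mu i \<le> E}" by (rule Ncount_ONB[OF fin(2) sy2 o2])
  have seteq: "{i. i < card (A1 \<union> A2) \<and> lam' i \<le> E} = {i. i < ?n1 \<and> lam i \<le> E} \<union> (\<lambda>j. ?n1 + j) ` {i. i < ?n2 \<and> mu i \<le> E}"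
  proof (rule set_eqI)
    fix i
    show "i \<in> {i. i < card (A1 \<union> A2) \<and> lam' i \<le> E} \<longleftrightarrow> i \<in> {i. i < ?n1 \<and> lam i \<le> E} \<union> (\<lambda>j. ?n1 + j) ` {i. i < ?n2 \<and> mu i \<le> E}"
    proof (cases "i < ?n1")
      case True then show ?thesis unfolding cardU lam'_def by auto
    next
      case False
      then obtain j where "i = ?n1 + j" by (metis le_iff_add not_less)
      then show ?thesis unfolding cardU lam'_def by auto
    qed
  qed
  have "card ({i. i < ?n1 \<and> lam i \<le> E} \<union> (\<lambda>j. ?n1 + j) ` {i. i < ?n2 \<and> mu i \<le> E})
      = card {i. i < ?n1 \<and> lam i \<le> E} + card ((\<lambda>j. ?n1 + j) ` {i. i < ?n2 \<and> mu i \<le> E})"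
    by (rule card_Un_disjoint) auto
  also have "card ((\<lambda>j. ?n1 + j) ` {i. i < ?n2 \<and> mu i \<le> E}) = card {i. i < ?n2 \<and> mu i \<le> E}"
    by (rule card_image) (auto simp: inj_on_def)
  finally show ?thesis unfolding NU N1 N2 seteq by simp
qed




definition lat :: "int \<times> int \<Rightarrow> pt" where
  "lat p = (real_of_int (fst p) + real_of_int (snd p) / 2, real_of_int (snd p) * sqrt 3 / 2)"

fun Kc :: "nat \<Rightarrow> (int \<times> int) set" where
  "Kc 0 = {(0,0)}"
| "Kc (Suc n) = Kc n \<union> (\<lambda>p. (fst p + 2^n, snd p)) ` Kc n \<union> (\<lambda>p. (fst p, snd p + 2^n)) ` Kc n"

definition tk :: "int \<times> int \<Rightarrow> (int \<times> int) set" where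
  "tk c = {c, (fst c + 1, snd c), (fst c, snd c + 1)}"

definition mk :: "int \<times> int \<Rightarrow> int \<times> int" where
  "mk p = (- fst p - snd p, snd p)"

definition GK :: "nat \<Rightarrow> (int \<times> int) set" where
  "GK n = (\<Union>c\<in>Kc n. tk c)"

lemma lat_inj: "inj lat"
proof (rule injI)
  fix p q assume e: "lat p = lat q"
  have s3: "sqrt 3 \<noteq> (0::real)" by simp
  from e have "real_of_int (snd p) * sqrt 3 / 2 = real_of_int (snd q) * sqrt 3 / 2"
    unfolding lat_def by simp
  then have "snd p = snd q" using s3 by simp
  moreover from e have "real_of_int (fst p) + real_of_int (snd p) / 2 = real_of_int (fst q) + real_of_int (snd q) / 2"
    unfolding lat_def by simp
  ultimately show "p = q" by (simp add: prod_eq_iff)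
qed

lemma lat_eq_iff [simp]: "lat p = lat q \<longleftrightarrow> p = q"
  using lat_inj by (auto dest: injD)

lemma lat_shift2: "lat p + (2::real)^n *\<^sub>R a2 = lat (fst p + 2^n, snd p)"
  unfolding lat_def a2_def by simp

lemma lat_shift3: "lat p + (2::real)^n *\<^sub>R a3 = lat (fst p, snd p + 2^n)"
  unfolding lat_def a3_def by (simp add: field_simps)

lemma corners_eq: "corners n = lat ` Kc n"
proof (induction n)
  case 0 then show ?case by (simp add: a1_def lat_def zero_prod_def)
next
  case (Suc n)
  have 2: "(\<lambda>c. c + (2::real)^n *\<^sub>R a2) ` lat ` Kc n = lat ` (\<lambda>p. (fst p + 2^n, snd p)) ` Kc n"
    by (simp add: image_image lat_shift2)
  have 3: "(\<lambda>c. c + (2::real)^n *\<^sub>R a3) ` lat ` Kc n = lat ` (\<lambda>p. (fst p, snd p + 2^n)) ` Kc n"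
    by (simp add: image_image lat_shift3)
  show ?case using Suc by (simp add: 2 3 image_Un)
qed

lemma tri_lat: "tri (lat c) = lat ` tk c"
  unfolding tri_def tk_def lat_def a1_def a2_def a3_def by (simp add: field_simps)

lemma mirror_lat: "mirror (lat p) = lat (mk p)"
  unfolding mirror_def mk_def lat_def by (simp add: field_simps)

lemma Gn_eq: "Gn n = lat ` GK n"
  unfolding Gn_def GK_def corners_eq by (auto simp: tri_lat)

lemma SG_sub: "SG \<subseteq> range lat"
  unfolding SG_def Gn_eq by (auto simp: mirror_lat)

lemma adj_range: "adj x y \<Longrightarrow> x \<in> range lat \<and> y \<in> range lat"
  unfolding adj_def using SG_sub by blast

lemma adj_sym: "adj x y \<longleftrightarrow> adj y x"
  unfolding adj_def by blast

lemma adj_cases: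
  assumes "adj (lat p) (lat q)"
  shows "p \<noteq> q \<and> (\<exists>n c. c \<in> Kc n \<and> ((p \<in> tk c \<and> q \<in> tk c) \<or> (p \<in> mk ` tk c \<and> q \<in> mk ` tk c)))"
proof -
  from assms have pq: "p \<noteq> q" unfolding adj_def by auto
  from assms obtain t where t: "t \<in> unit_tris" "lat p \<in> t" "lat q \<in> t" unfolding adj_def by auto
  from t(1) show ?thesis
    unfolding unit_tris_def
  proof (elim UnE CollectE exE conjE)
    fix c n assume tc: "t = tri c" "c \<in> corners n"
    then obtain c' where c': "c = lat c'" "c' \<in> Kc n" unfolding corners_eq by auto
    then have "p \<in> tk c'" "q \<in> tk c'" using t tc by (auto simp: tri_lat)
    then show ?thesis using pq c' by blast
  next
    fix c n assume tc: "t = mirror ` tri c" "c \<in> corners n"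
    then obtain c' where c': "c = lat c'" "c' \<in> Kc n" unfolding corners_eq by auto
    have "t = lat ` mk ` tk c'" using tc c' by (simp add: tri_lat mirror_lat image_image)
    then have "p \<in> mk ` tk c'" "q \<in> mk ` tk c'" using t by auto
    then show ?thesis using pq c' by blast
  qed
qed

definition nb :: "int \<times> int \<Rightarrow> int \<times> int \<Rightarrow> bool" where
  "nb p q \<longleftrightarrow> (fst q - fst p, snd q - snd p) \<in> {(1,0),(-1,0),(0,1),(0,-1),(1,-1),(-1,1)}"

lemma nb_tk: assumes "p \<in> tk c" "q \<in> tk c" "p \<noteq> q" shows "nb p q"
proof -
  obtain a b where c: "c = (a, b)" by (cases c)
  have p: "p = (a,b) \<or> p = (a+1,b) \<or> p = (a,b+1)" using assms(1) unfolding tk_def c by simp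
  have q: "q = (a,b) \<or> q = (a+1,b) \<or> q = (a,b+1)" using assms(2) unfolding tk_def c by simp
  from p q assms(3) show ?thesis unfolding nb_def by (elim disjE) simp_all
qed

lemma nb_mk: assumes "p \<in> mk ` tk c" "q \<in> mk ` tk c" "p \<noteq> q" shows "nb p q"
proof -
  obtain a b where c: "c = (a, b)" by (cases c)
  have p: "p = (-a-b,b) \<or> p = (-a-b-1,b) \<or> p = (-a-b-1,b+1)" using assms(1) unfolding tk_def c mk_def by auto
  have q: "q = (-a-b,b) \<or> q = (-a-b-1,b) \<or> q = (-a-b-1,b+1)" using assms(2) unfolding tk_def c mk_def by auto
  from p q assms(3) show ?thesis unfolding nb_def by (elim disjE) simp_all
qed

lemma adj_nb: assumes "adj (lat p) (lat q)" shows "nb p q"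
proof -
  from adj_cases[OF assms] obtain n c where pq: "p \<noteq> q"
    and c: "(p \<in> tk c \<and> q \<in> tk c) \<or> (p \<in> mk ` tk c \<and> q \<in> mk ` tk c)" by blast
  from c show ?thesis using nb_tk nb_mk pq by blast
qed

lemma Kc_bound: "c \<in> Kc n \<Longrightarrow> 0 \<le> fst c \<and> 0 \<le> snd c \<and> fst c + snd c \<le> 2^n - 1"
proof (induction n arbitrary: c)
  case 0 then show ?case by simp
next
  case (Suc n)
  have p: "(2::int)^Suc n = 2 * 2^n" by simp
  have pos: "(0::int) < 2^n" by simp
  from Suc.prems have "c \<in> Kc n \<or> (\<exists>c'\<in>Kc n. c = (fst c' + 2^n, snd c')) \<or> (\<exists>c'\<in>Kc n. c = (fst c', snd c' + 2^n))"
    by auto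
  then show ?case
  proof (elim disjE bexE)
    assume "c \<in> Kc n" then show ?thesis using Suc.IH pos unfolding p by fastforce
  next
    fix c' assume "c' \<in> Kc n" "c = (fst c' + 2^n, snd c')"
    then show ?thesis using Suc.IH[of c'] pos unfolding p by simp
  next
    fix c' assume "c' \<in> Kc n" "c = (fst c', snd c' + 2^n)"
    then show ?thesis using Suc.IH[of c'] pos unfolding p by simp
  qed
qed

lemma Kc_mono_Suc: "Kc n \<subseteq> Kc (Suc n)" by auto

lemma Kc_mono: "n \<le> m \<Longrightarrow> Kc n \<subseteq> Kc m"
  by (induction m) (auto simp: le_Suc_eq)

lemma Kc_add:
  "c \<in> Kc (a + b) \<Longrightarrow> \<exists>c0\<in>Kc a. \<exists>d\<in>Kc b. c = (fst c0 + 2^a * fst d, snd c0 + 2^a * snd d)"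
proof (induction b arbitrary: c)
  case 0 then show ?case by (intro bexI[of _ c] bexI[of _ "(0,0)"]) auto
next
  case (Suc b)
  have pw: "(2::int)^(a + b) = 2^a * 2^b" by (simp add: power_add)
  from Suc.prems have "c \<in> Kc (a + b) \<or> c \<in> (\<lambda>p. (fst p + 2^(a+b), snd p)) ` Kc (a + b)
       \<or> c \<in> (\<lambda>p. (fst p, snd p + 2^(a+b))) ` Kc (a + b)" by simp
  then show ?case
  proof (elim disjE)
    assume "c \<in> Kc (a + b)"
    then obtain c0 d where "c0 \<in> Kc a" "d \<in> Kc b" "c = (fst c0 + 2^a * fst d, snd c0 + 2^a * snd d)"
      using Suc.IH by blast
    then show ?thesis by (intro bexI[of _ c0] bexI[of _ d]) auto
  next
    assume "c \<in> (\<lambda>p. (fst p + 2^(a+b), snd p)) ` Kc (a + b)"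
    then obtain c' where c': "c' \<in> Kc (a + b)" "c = (fst c' + 2^(a+b), snd c')" by auto
    then obtain c0 d where "c0 \<in> Kc a" "d \<in> Kc b" "c' = (fst c0 + 2^a * fst d, snd c0 + 2^a * snd d)"
      using Suc.IH by blast
    then show ?thesis using c'(2)
      by (intro bexI[of _ c0] bexI[of _ "(fst d + 2^b, snd d)"]) (auto simp: pw algebra_simps)
  next
    assume "c \<in> (\<lambda>p. (fst p, snd p + 2^(a+b))) ` Kc (a + b)"
    then obtain c' where c': "c' \<in> Kc (a + b)" "c = (fst c', snd c' + 2^(a+b))" by auto
    then obtain c0 d where "c0 \<in> Kc a" "d \<in> Kc b" "c' = (fst c0 + 2^a * fst d, snd c0 + 2^a * snd d)"
      using Suc.IH by blast
    then show ?thesis using c'(2)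
      by (intro bexI[of _ c0] bexI[of _ "(fst d, snd d + 2^b)"]) (auto simp: pw algebra_simps)
  qed
qed

definition Rg :: "nat \<Rightarrow> (int \<times> int) set" where
  "Rg L = {p. 0 \<le> fst p \<and> 0 \<le> snd p \<and> fst p + snd p \<le> 2^L}"

lemma GK_Rg: "GK n \<subseteq> Rg n"
  unfolding GK_def Rg_def tk_def using Kc_bound by fastforce

lemma KS:
  assumes c: "c \<in> Kc n" and p: "p \<in> tk c" "p \<in> Rg L" and nc: "c \<notin> Kc L"
  shows "(p = (2^L, 0) \<or> p = (0, 2^L)) \<and> (\<forall>q\<in>tk c. q \<in> Rg L \<longrightarrow> q = p)"
proof -
  have "\<not> n \<le> L" using c nc Kc_mono by blast
  then obtain b where nb: "n = L + b" by (metis le_iff_add nat_le_linear)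
  from Kc_add[of c L b] c nb obtain c0 d where c0: "c0 \<in> Kc L" and d: "d \<in> Kc b"
    and ceq: "c = (fst c0 + 2^L * fst d, snd c0 + 2^L * snd d)" by blast
  have d0: "d \<noteq> (0,0)" using ceq c0 nc by auto
  have bc0: "0 \<le> fst c0" "0 \<le> snd c0" using Kc_bound[OF c0] by auto
  have bd: "0 \<le> fst d" "0 \<le> snd d" using Kc_bound[OF d] by auto
  define H :: int where "H = 2^L"
  have H: "H > 0" unfolding H_def by simp
  have dsum: "fst d + snd d \<ge> 1" using d0 bd by (cases d) auto
  have Hd: "H * fst d + H * snd d \<ge> H"
  proof -
    have "H * (fst d + snd d) \<ge> H * 1" using dsum H by (intro mult_left_mono) auto
    then show ?thesis by (simp add: algebra_simps)
  qed
  have Hd2: "fst d + snd d \<ge> 2 \<Longrightarrow> H * fst d + H * snd d \<ge> 2 * H"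
  proof -
    assume "fst d + snd d \<ge> 2"
    then have "H * (fst d + snd d) \<ge> H * 2" using H by (intro mult_left_mono) auto
    then show ?thesis by (simp add: algebra_simps)
  qed
  have key: "q = (H * fst d, H * snd d) \<and> fst d + snd d = 1" if q: "q \<in> tk c" "q \<in> Rg L" for q
  proof -
    have qs: "fst q + snd q \<le> H" using q(2) unfolding Rg_def H_def by auto
    from q(1) have qc: "q = c \<or> q = (fst c + 1, snd c) \<or> q = (fst c, snd c + 1)" unfolding tk_def by auto
    have ceq': "fst c = fst c0 + H * fst d" "snd c = snd c0 + H * snd d" using ceq unfolding H_def by auto
    have "fst d + snd d = 1"
    proof (rule ccontr)
      assume "fst d + snd d \<noteq> 1"
      then have "fst d + snd d \<ge> 2" using dsum by auto
      from Hd2[OF this] qc qs ceq' bc0 H show False by auto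
    qed
    moreover have "q = c" "c0 = (0,0)" using qc qs ceq' bc0 Hd H by (auto simp: prod_eq_iff)
    ultimately show ?thesis using ceq' by (auto simp: prod_eq_iff)
  qed
  from key[OF p] have kp: "p = (H * fst d, H * snd d)" "fst d + snd d = 1" by auto
  then have "d = (1,0) \<or> d = (0,1)" using bd by (cases d) auto
  then have "p = (2^L, 0) \<or> p = (0, 2^L)" using kp unfolding H_def by auto
  moreover have "\<forall>q\<in>tk c. q \<in> Rg L \<longrightarrow> q = p" using key kp by auto
  ultimately show ?thesis by blast
qed

lemma MS:
  assumes c: "c \<in> Kc n" and p: "p \<in> mk ` tk c" "p \<in> Rg L"
  shows "p = (0,0)"
proof -
  from p(1) obtain r where r: "r \<in> tk c" "p = mk r" by auto
  have "0 \<le> fst r" "0 \<le> snd r" using Kc_bound[OF c] r(1) unfolding tk_def by auto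
  then show ?thesis using r(2) p(2) unfolding mk_def Rg_def by (auto simp: prod_eq_iff)
qed

definition ExK :: "nat \<Rightarrow> (int \<times> int) set" where
  "ExK L = {(0,0), (2^L, 0), (0, 2^L)}"

lemma extreme_eq: "extreme L = lat ` ExK L"
  unfolding extreme_def ExK_def lat_def a1_def a2_def a3_def by (auto simp: field_simps)

lemma adj_G:
  assumes p: "p \<in> Rg L" "p \<notin> ExK L" and a: "adj (lat p) (lat q)"
  shows "\<exists>c\<in>Kc L. p \<in> tk c \<and> q \<in> tk c"
proof -
  from adj_cases[OF a] obtain n c where c: "c \<in> Kc n"
    and cs: "(p \<in> tk c \<and> q \<in> tk c) \<or> (p \<in> mk ` tk c \<and> q \<in> mk ` tk c)" by blast
  from cs show ?thesis
  proof
    assume pq: "p \<in> tk c \<and> q \<in> tk c"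
    show ?thesis
    proof (cases "c \<in> Kc L")
      case True then show ?thesis using pq by blast
    next
      case False
      from KS[OF c _ p(1) False] pq have "p = (2^L, 0) \<or> p = (0, 2^L)" by blast
      then show ?thesis using p(2) unfolding ExK_def by auto
    qed
  next
    assume "p \<in> mk ` tk c \<and> q \<in> mk ` tk c"
    then have "p = (0,0)" using MS[OF c _ p(1)] by blast
    then show ?thesis using p(2) unfolding ExK_def by auto
  qed
qed

lemma adj_G2:
  assumes p: "p \<in> Rg L" and q: "q \<in> Rg L" and a: "adj (lat p) (lat q)"
  shows "\<exists>c\<in>Kc L. p \<in> tk c \<and> q \<in> tk c"
proof -
  from adj_cases[OF a] obtain n c where pq: "p \<noteq> q" and c: "c \<in> Kc n"
    and cs: "(p \<in> tk c \<and> q \<in> tk c) \<or> (p \<in> mk ` tk c \<and> q \<in> mk ` tk c)" by blast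
  from cs show ?thesis
  proof
    assume pq': "p \<in> tk c \<and> q \<in> tk c"
    show ?thesis
    proof (cases "c \<in> Kc L")
      case True then show ?thesis using pq' by blast
    next
      case False
      from KS[OF c _ p False] pq' q pq show ?thesis by blast
    qed
  next
    assume "p \<in> mk ` tk c \<and> q \<in> mk ` tk c"
    then have "p = (0,0)" "q = (0,0)" using MS[OF c _ p] MS[OF c _ q] by blast+
    then show ?thesis using pq by simp
  qed
qed




lemma lat_add: "lat p + lat q = lat (fst p + fst q, snd p + snd q)"
  unfolding lat_def by (simp add: field_simps)

lemma lat0: "lat (0,0) = 0" unfolding lat_def by (simp add: zero_prod_def)

lemma Gtil_eq: "Gtil L = lat ` (GK L - ExK L)"
  unfolding Gtil_def Gn_eq extreme_eq by (simp add: image_set_diff[OF lat_inj])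

definition DK :: "nat \<Rightarrow> bool \<Rightarrow> (int \<times> int) set" where
  "DK L t = (if t then GK L - ExK L else GK L)"

lemma dom_eq: "dom_L L t = lat ` DK L t"
  unfolding dom_L_def DK_def by (simp add: Gtil_eq Gn_eq)

definition NE :: "nat \<Rightarrow> (int \<times> int) list" where
  "NE L = [(0,0), (2^L,0), (0,2^L), (1,0), (0,1), (2^L-1,0), (2^L-1,1), (0,2^L-1), (1,2^L-1)]"

lemma ExK_NE: "ExK L \<subseteq> set (NE L)" unfolding ExK_def NE_def by auto

lemma nb_Ex_NE:
  assumes "q \<in> ExK L" "nb p q" "p \<in> Rg L"
  shows "p \<in> set (NE L)"
proof -
  define H :: int where "H = 2^L"
  have H: "H \<ge> 1" unfolding H_def by simp
  have q: "q = (0,0) \<or> q = (H,0) \<or> q = (0,H)" using assms(1) unfolding ExK_def H_def by auto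
  obtain a b where p: "p = (a,b)" by (cases p)
  have r: "0 \<le> a" "0 \<le> b" "a + b \<le> H" using assms(3) unfolding Rg_def p H_def by auto
  have d: "(fst q - a, snd q - b) \<in> {(1,0),(-1,0),(0,1),(0,-1),(1,-1),(-1,1)}"
    using assms(2) unfolding nb_def p by simp
  have "p = (1,0) \<or> p = (0,1) \<or> p = (H-1,0) \<or> p = (H-1,1) \<or> p = (0,H-1) \<or> p = (1,H-1)"
    using q d r H unfolding p by (elim disjE) auto
  then show ?thesis unfolding NE_def H_def by auto
qed

definition CK1 :: "nat \<Rightarrow> (int \<times> int) set" where
  "CK1 L = GK L - set (NE L)"

lemma CK1_nbrs:
  assumes p: "p \<in> CK1 L" and a: "adj (lat p) y"
  shows "y \<in> Gtil L"
proof -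
  obtain q where y: "y = lat q" using adj_range[OF a] by auto
  have pR: "p \<in> Rg L" using p GK_Rg unfolding CK1_def by auto
  have pE: "p \<notin> ExK L" using p ExK_NE unfolding CK1_def by auto
  from adj_G[OF pR pE a[unfolded y]] obtain c where c: "c \<in> Kc L" "q \<in> tk c" by blast
  have qG: "q \<in> GK L" using c unfolding GK_def by auto
  have "q \<notin> ExK L"
  proof
    assume "q \<in> ExK L"
    from nb_Ex_NE[OF this adj_nb[OF a[unfolded y]] pR] p show False unfolding CK1_def by auto
  qed
  then show ?thesis using qG y unfolding Gtil_eq by auto
qed

lemma CK1_sub: "CK1 L \<subseteq> DK L t"
  unfolding CK1_def DK_def using ExK_NE by auto

lemma card_DK_CK1: "card (lat ` DK L t - lat ` CK1 L) \<le> 9"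
proof -
  have "lat ` DK L t - lat ` CK1 L \<subseteq> lat ` set (NE L)"
    unfolding DK_def CK1_def by auto
  then have "card (lat ` DK L t - lat ` CK1 L) \<le> card (lat ` set (NE L))"
    by (intro card_mono) auto
  also have "\<dots> \<le> card (set (NE L))" by (rule card_image_le) simp
  also have "\<dots> \<le> length (NE L)" by (rule card_length)
  finally show ?thesis unfolding NE_def by simp
qed




definition tr :: "int \<times> int \<Rightarrow> int \<times> int \<Rightarrow> int \<times> int" where
  "tr s p = (fst p + fst s, snd p + snd s)"

definition sh :: "nat \<Rightarrow> nat \<Rightarrow> int \<times> int" where
  "sh m k = (if k = 1 then (0,0) else if k = 2 then (2^m, 0) else (0, 2^m))"

definition GP :: "nat \<Rightarrow> nat \<Rightarrow> (int \<times> int) set" where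
  "GP m k = tr (sh m k) ` GK m"

definition PK :: "nat \<Rightarrow> bool \<Rightarrow> nat \<Rightarrow> (int \<times> int) set" where
  "PK m t k = tr (sh m k) ` DK m t"

definition Jn :: "nat \<Rightarrow> (int \<times> int) set" where
  "Jn m = {(2^m,0), (0,2^m), (2^m,2^m)}"

definition Reg :: "nat \<Rightarrow> nat \<Rightarrow> (int \<times> int) set" where
  "Reg m k = (if k = 1 then {p. 0 \<le> fst p \<and> 0 \<le> snd p \<and> fst p + snd p \<le> 2^m}
     else if k = 2 then {p. 2^m \<le> fst p \<and> 0 \<le> snd p \<and> fst p + snd p \<le> 2 * 2^m}
     else {p. 0 \<le> fst p \<and> 2^m \<le> snd p \<and> fst p + snd p \<le> 2 * 2^m})"

lemma subdom_eq:
  assumes "k \<in> {1,2,3}"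
  shows "subdom (Suc m) t k = lat ` PK m t k"
proof -
  have "shift (Suc m) k = lat (sh m k)"
    using assms lat_shift2[of "(0,0)" m] lat_shift3[of "(0,0)" m]
    unfolding shift_def sh_def by (auto simp: lat0)
  then show ?thesis
    unfolding subdom_def PK_def dom_eq by (simp add: image_image lat_add tr_def)
qed

lemma tk_tr: "tk (tr s c) = tr s ` tk c"
  unfolding tk_def tr_def by auto

lemma Kc_Suc_piece:
  assumes "c \<in> Kc (Suc m)"
  shows "\<exists>k\<in>{1,2,3}. tk c \<subseteq> GP m k"
proof -
  have tr1: "tr (sh m 1) = id" unfolding sh_def tr_def by (auto simp: fun_eq_iff)
  from assms have "c \<in> Kc m \<or> c \<in> tr (sh m 2) ` Kc m \<or> c \<in> tr (sh m 3) ` Kc m"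
    unfolding sh_def tr_def by auto
  then show ?thesis
  proof (elim disjE)
    assume "c \<in> Kc m"
    then have "tk c \<subseteq> GP m 1" unfolding GP_def GK_def tr1 by auto
    then show ?thesis by blast
  next
    assume "c \<in> tr (sh m 2) ` Kc m"
    then obtain c0 where "c0 \<in> Kc m" "c = tr (sh m 2) c0" by auto
    then have "tk c \<subseteq> GP m 2" unfolding GP_def GK_def by (auto simp: tk_tr)
    then show ?thesis by blast
  next
    assume "c \<in> tr (sh m 3) ` Kc m"
    then obtain c0 where "c0 \<in> Kc m" "c = tr (sh m 3) c0" by auto
    then have "tk c \<subseteq> GP m 3" unfolding GP_def GK_def by (auto simp: tk_tr)
    then show ?thesis by blast
  qed
qed

lemma GK_Suc_cover: "p \<in> GK (Suc m) \<Longrightarrow> \<exists>k\<in>{1,2,3}. p \<in> GP m k"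
  unfolding GK_def using Kc_Suc_piece by blast

lemma GP_sub: "k \<in> {1,2,3} \<Longrightarrow> GP m k \<subseteq> GK (Suc m)"
proof -
  assume k: "k \<in> {1,2,3}"
  have tr1: "tr (sh m 1) = id" unfolding sh_def tr_def by (auto simp: fun_eq_iff)
  show ?thesis
  proof
    fix p assume "p \<in> GP m k"
    then obtain c r where c: "c \<in> Kc m" "r \<in> tk c" "p = tr (sh m k) r" unfolding GP_def GK_def by auto
    have "tr (sh m k) c \<in> Kc (Suc m)" using k c(1) unfolding sh_def tr_def by auto
    moreover have "p \<in> tk (tr (sh m k) c)" using c unfolding tk_tr by auto
    ultimately show "p \<in> GK (Suc m)" unfolding GK_def by blast
  qed
qed

lemma GP_Reg: "k \<in> {1,2,3} \<Longrightarrow> GP m k \<subseteq> Reg m k"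
proof -
  assume k: "k \<in> {1,2,3}"
  show ?thesis
  proof
    fix p assume "p \<in> GP m k"
    then obtain r where r: "r \<in> GK m" "p = tr (sh m k) r" unfolding GP_def by auto
    have "r \<in> Rg m" using r GK_Rg by auto
    then show "p \<in> Reg m k" using k r(2) unfolding Rg_def Reg_def tr_def sh_def by auto
  qed
qed

lemma Reg12: "p \<in> Reg m 1 \<Longrightarrow> p \<in> Reg m 2 \<Longrightarrow> p = (2^m, 0)"
  unfolding Reg_def by (cases p) simp
lemma Reg13: "p \<in> Reg m 1 \<Longrightarrow> p \<in> Reg m 3 \<Longrightarrow> p = (0, 2^m)"
  unfolding Reg_def by (cases p) simp
lemma Reg23: "p \<in> Reg m 2 \<Longrightarrow> p \<in> Reg m 3 \<Longrightarrow> p = (2^m, 2^m)"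
  unfolding Reg_def by (cases p) simp

lemma Reg_int:
  assumes ik: "i \<in> {1,2,3}" "k \<in> {1,2,3}" "i \<noteq> k" and p: "p \<in> Reg m i" "p \<in> Reg m k"
  shows "p \<in> Jn m"
proof -
  from ik consider "i = 1" "k = 2" | "i = 2" "k = 1" | "i = 1" "k = 3" | "i = 3" "k = 1"
    | "i = 2" "k = 3" | "i = 3" "k = 2" by fastforce
  then show ?thesis
  proof cases
    case 1 then show ?thesis using Reg12[of p m] p unfolding Jn_def by simp
  next
    case 2 then show ?thesis using Reg12[of p m] p unfolding Jn_def by simp
  next
    case 3 then show ?thesis using Reg13[of p m] p unfolding Jn_def by simp
  next
    case 4 then show ?thesis using Reg13[of p m] p unfolding Jn_def by simp
  next
    case 5 then show ?thesis using Reg23[of p m] p unfolding Jn_def by simp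
  next
    case 6 then show ?thesis using Reg23[of p m] p unfolding Jn_def by simp
  qed
qed

lemma GP_int: "i \<in> {1,2,3} \<Longrightarrow> k \<in> {1,2,3} \<Longrightarrow> i \<noteq> k \<Longrightarrow> p \<in> GP m i \<Longrightarrow> p \<in> GP m k \<Longrightarrow> p \<in> Jn m"
proof -
  assume a: "i \<in> {1,2,3}" "k \<in> {1,2,3}" "i \<noteq> k" "p \<in> GP m i" "p \<in> GP m k"
  have "p \<in> Reg m i" using GP_Reg[OF a(1)] a(4) by (rule subsetD)
  moreover have "p \<in> Reg m k" using GP_Reg[OF a(2)] a(5) by (rule subsetD)
  ultimately show ?thesis using Reg_int[OF a(1,2,3)] by blast
qed

lemma PK_GP: "PK m t k \<subseteq> GP m k"
  unfolding PK_def GP_def DK_def by auto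

lemma trEx:
  assumes k: "k \<in> {1,2,3}" and p: "p \<in> Rg m" "tr (sh m k) p \<in> ExK (Suc m)"
  shows "p \<in> ExK m"
proof -
  obtain a b where pab: "p = (a,b)" by (cases p)
  define h :: int where "h = 2^m"
  have h: "h \<ge> 1" unfolding h_def by simp
  have R: "0 \<le> a" "0 \<le> b" "a + b \<le> h" using p(1) unfolding Rg_def pab h_def by auto
  have E: "tr (sh m k) p = (0,0) \<or> tr (sh m k) p = (2*h,0) \<or> tr (sh m k) p = (0,2*h)"
    using p(2) unfolding ExK_def h_def by auto
  from k consider "k = 1" | "k = 2" | "k = 3" by fastforce
  then have "p = (0,0) \<or> p = (h,0) \<or> p = (0,h)"
  proof cases
    case 1 then show ?thesis using E R h unfolding tr_def sh_def pab by auto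
  next
    case 2 then show ?thesis using E R h unfolding tr_def sh_def pab h_def by auto
  next
    case 3 then show ?thesis using E R h unfolding tr_def sh_def pab h_def by auto
  qed
  then show ?thesis unfolding ExK_def h_def by auto
qed

lemma trEx2:
  assumes k: "k \<in> {1,2,3}" and p: "p \<in> ExK m"
  shows "tr (sh m k) p \<in> ExK (Suc m) \<union> Jn m"
proof -
  from k consider "k = 1" | "k = 2" | "k = 3" by fastforce
  then show ?thesis
  proof cases
    case 1 then show ?thesis using p unfolding Jn_def ExK_def tr_def sh_def by auto
  next
    case 2 then show ?thesis using p unfolding Jn_def ExK_def tr_def sh_def by auto
  next
    case 3 then show ?thesis using p unfolding Jn_def ExK_def tr_def sh_def by auto
  qed
qed

lemma PK_DK: assumes k: "k \<in> {1,2,3}" shows "PK m t k \<subseteq> DK (Suc m) t"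
proof
  fix p assume p: "p \<in> PK m t k"
  then obtain r where r: "r \<in> DK m t" "p = tr (sh m k) r" unfolding PK_def by auto
  have pG: "p \<in> GK (Suc m)" using p PK_GP GP_sub[OF k] by blast
  show "p \<in> DK (Suc m) t"
  proof (cases t)
    case True
    have rR: "r \<in> Rg m" using r GK_Rg True unfolding DK_def by auto
    have "r \<notin> ExK m" using r True unfolding DK_def by auto
    then have "p \<notin> ExK (Suc m)" using trEx[OF k rR] r by auto
    then show ?thesis using pG True unfolding DK_def by auto
  next
    case False then show ?thesis using pG unfolding DK_def by auto
  qed
qed

lemma DK_cover:
  assumes p: "p \<in> DK (Suc m) t" "p \<notin> Jn m"
  shows "\<exists>k\<in>{1,2,3}. p \<in> PK m t k"
proof -
  have pG: "p \<in> GK (Suc m)" using p unfolding DK_def by (auto split: if_splits)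
  from GK_Suc_cover[OF pG] obtain k where k: "k \<in> {1,2,3}" "p \<in> GP m k" by blast
  then obtain r where r: "r \<in> GK m" "p = tr (sh m k) r" unfolding GP_def by auto
  have "r \<in> DK m t"
  proof (cases t)
    case True
    have "r \<notin> ExK m"
    proof
      assume "r \<in> ExK m"
      from trEx2[OF k(1) this] r p True show False unfolding DK_def by auto
    qed
    then show ?thesis using r True unfolding DK_def by auto
  next
    case False then show ?thesis using r unfolding DK_def by auto
  qed
  then show ?thesis using k r unfolding PK_def by auto
qed

lemma nbr2:
  assumes k: "k \<in> {1,2,3}" and p: "p \<in> PK m t k" "p \<notin> Jn m" and q: "q \<in> DK (Suc m) t"
    and a: "adj (lat p) (lat q)"
  shows "q \<in> PK m t k \<or> q \<in> Jn m"
proof -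
  have pD: "p \<in> DK (Suc m) t" using PK_DK[OF k] p by auto
  have pR: "p \<in> Rg (Suc m)" using pD GK_Rg unfolding DK_def by (auto split: if_splits)
  have qR: "q \<in> Rg (Suc m)" using q GK_Rg unfolding DK_def by (auto split: if_splits)
  from adj_G2[OF pR qR a] obtain c where c: "c \<in> Kc (Suc m)" "p \<in> tk c" "q \<in> tk c" by blast
  from Kc_Suc_piece[OF c(1)] obtain k' where k': "k' \<in> {1,2,3}" "tk c \<subseteq> GP m k'" by blast
  have "k' = k"
  proof (rule ccontr)
    assume "k' \<noteq> k"
    have "p \<in> GP m k" using p PK_GP by auto
    moreover have "p \<in> GP m k'" using k' c by auto
    ultimately have "p \<in> Jn m" using GP_int[OF k k'(1)] \<open>k' \<noteq> k\<close> by auto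
    then show False using p by simp
  qed
  then have qP: "q \<in> GP m k" using k' c by auto
  then obtain r where r: "r \<in> GK m" "q = tr (sh m k) r" unfolding GP_def by auto
  show ?thesis
  proof (cases "r \<in> DK m t")
    case True then show ?thesis using r unfolding PK_def by auto
  next
    case False
    then have "t" "r \<in> ExK m" using r unfolding DK_def by (auto split: if_splits)
    then have "q \<in> ExK (Suc m) \<union> Jn m" using trEx2[OF k] r by auto
    then show ?thesis using q \<open>t\<close> unfolding DK_def by auto
  qed
qed

definition nbl :: "int \<times> int \<Rightarrow> (int \<times> int) list" where
  "nbl q = [(fst q - 1, snd q), (fst q + 1, snd q), (fst q, snd q - 1), (fst q, snd q + 1),
            (fst q - 1, snd q + 1), (fst q + 1, snd q - 1)]"

lemma nb_nbl: "nb p q \<Longrightarrow> p \<in> set (nbl q)"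
  unfolding nb_def nbl_def by (cases p, cases q) auto

definition Jl :: "nat \<Rightarrow> (int \<times> int) list" where
  "Jl m = [(2^m,0), (0,2^m), (2^m,2^m)]"

definition Bad2 :: "nat \<Rightarrow> (int \<times> int) list" where
  "Bad2 m = Jl m @ concat (map nbl (Jl m))"

lemma Jn_Bad2: "Jn m \<subseteq> set (Bad2 m)" unfolding Jn_def Bad2_def Jl_def by auto

lemma nbJ_Bad2: "q \<in> Jn m \<Longrightarrow> nb p q \<Longrightarrow> p \<in> set (Bad2 m)"
proof -
  assume q: "q \<in> Jn m" and n: "nb p q"
  have "p \<in> set (nbl q)" using nb_nbl[OF n] .
  moreover have "q = (2^m,0) \<or> q = (0,2^m) \<or> q = (2^m,2^m)" using q unfolding Jn_def by auto
  ultimately show ?thesis unfolding Bad2_def Jl_def by (elim disjE) simp_all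
qed

lemma length_Bad2: "length (Bad2 m) = 21" unfolding Bad2_def Jl_def nbl_def by simp

definition Lk :: "nat \<Rightarrow> nat \<Rightarrow> (int \<times> int) list" where
  "Lk m k = (let h = (2::int)^m in
     if k = 1 then [(h,0),(0,h),(h-1,0),(h-1,1),(0,h-1),(1,h-1)]
     else if k = 2 then [(h,0),(h,h),(h+1,0),(h,1),(h,h-1),(h+1,h-1)]
     else [(0,h),(h,h),(1,h),(0,h+1),(h-1,h),(h-1,h+1)])"

lemma Bad2_Reg:
  assumes k: "k \<in> {1,2,3}" and p: "p \<in> set (Bad2 m)" "p \<in> Reg m k"
  shows "p \<in> set (Lk m k)"
proof -
  define h :: int where "h = 2^m"
  have h: "h \<ge> 1" unfolding h_def by simp
  obtain a b where pab: "p = (a,b)" by (cases p)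
  have B: "(a,b) \<in> set ([(h,0),(0,h),(h,h)] @ concat (map nbl [(h,0),(0,h),(h,h)]))"
    using p(1) unfolding Bad2_def Jl_def h_def pab by simp
  show ?thesis
  proof (cases "k = 1")
    case True
    have R: "0 \<le> a" "0 \<le> b" "a + b \<le> h" using p(2) True unfolding Reg_def h_def pab by auto
    have "(a,b) \<in> set [(h,0),(0,h),(h-1,0),(h-1,1),(0,h-1),(1,h-1)]"
      using B R h unfolding nbl_def by simp presburger
    then show ?thesis using True unfolding Lk_def h_def pab by (auto simp: Let_def)
  next
    case False
    show ?thesis
    proof (cases "k = 2")
      case True
      have R: "h \<le> a" "0 \<le> b" "a + b \<le> 2 * h" using p(2) True unfolding Reg_def h_def pab by auto
      have "(a,b) \<in> set [(h,0),(h,h),(h+1,0),(h,1),(h,h-1),(h+1,h-1)]"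
        using B R h unfolding nbl_def by simp presburger
      then show ?thesis using True unfolding Lk_def h_def pab by (auto simp: Let_def)
    next
      case False2: False
      then have k3: "k = 3" using k False by auto
      have R: "0 \<le> a" "h \<le> b" "a + b \<le> 2 * h" using p(2) k3 unfolding Reg_def h_def pab by auto
      have "(a,b) \<in> set [(0,h),(h,h),(1,h),(0,h+1),(h-1,h),(h-1,h+1)]"
        using B R h unfolding nbl_def by simp presburger
      then show ?thesis using k3 unfolding Lk_def h_def pab by (auto simp: Let_def)
    qed
  qed
qed

lemma card_PK_Bad2:
  assumes k: "k \<in> {1,2,3}"
  shows "card (lat ` PK m t k - lat ` (PK m t k - set (Bad2 m))) \<le> 6"
proof -
  have "lat ` PK m t k - lat ` (PK m t k - set (Bad2 m)) \<subseteq> lat ` set (Lk m k)"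
  proof
    fix x assume "x \<in> lat ` PK m t k - lat ` (PK m t k - set (Bad2 m))"
    then obtain p where p: "x = lat p" "p \<in> PK m t k" "p \<in> set (Bad2 m)" by auto
    have "p \<in> Reg m k" using p(2) PK_GP GP_Reg[OF k] by blast
    then show "x \<in> lat ` set (Lk m k)" using Bad2_Reg[OF k p(3)] p(1) by auto
  qed
  then have "card (lat ` PK m t k - lat ` (PK m t k - set (Bad2 m))) \<le> card (lat ` set (Lk m k))"
    by (intro card_mono) auto
  also have "\<dots> \<le> card (set (Lk m k))" by (rule card_image_le) simp
  also have "\<dots> \<le> length (Lk m k)" by (rule card_length)
  also have "\<dots> = 6" unfolding Lk_def by (simp add: Let_def)
  finally show ?thesis .
qed




definition coef :: "pt set \<Rightarrow> bc \<Rightarrow> pt \<Rightarrow> real" where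
  "coef A b x = (case b of S \<Rightarrow> real (deg x) | N \<Rightarrow> real (degA A x) | D \<Rightarrow> 2 * real (deg x) - real (degA A x))"

definition MH :: "pt set \<Rightarrow> bc \<Rightarrow> (pt \<Rightarrow> real) \<Rightarrow> pt \<Rightarrow> pt \<Rightarrow> real" where
  "MH A b V = (\<lambda>x y. (if x = y then coef A b x + V x else 0) - (if adj y x then 1 else 0))"

lemma Hop_opM:
  assumes fA: "finite A"
  shows "Hop A b V = opM A (MH A b V)"
proof (rule ext, rule ext)
  fix f x
  show "Hop A b V f x = opM A (MH A b V) f x"
  proof (cases "x \<in> A")
    case True
    have "(\<Sum>y\<in>A. MH A b V x y * f y)
        = (\<Sum>y\<in>A. (if x = y then (coef A b x + V x) * f y else 0)) - (\<Sum>y\<in>A. (if adj y x then f y else 0))"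
      unfolding MH_def by (simp add: sum_subtractf[symmetric] left_diff_distrib if_distrib[of "\<lambda>z. z * f _"] cong: if_cong)
    also have "\<dots> = (coef A b x + V x) * f x - (\<Sum>y\<in>{y \<in> A. adj y x}. f y)"
      using True fA by (simp add: sum.delta sum.inter_filter)
    finally show ?thesis using True unfolding Hop_def opM_def coef_def
      by (simp add: algebra_simps split: bc.splits)
  next
    case False then show ?thesis unfolding Hop_def opM_def by simp
  qed
qed

lemma symm_MH: "symm A (MH A b V)"
  unfolding symm_def MH_def using adj_sym by auto

lemma coef_eq: assumes h: "{z \<in> A. adj x z} = {z \<in> B. adj x z}" shows "coef A b x = coef B b x"
  unfolding coef_def degA_def by (simp only: h)

lemma finite_Kc: "finite (Kc n)" by (induction n) auto
lemma finite_GK: "finite (GK n)" unfolding GK_def tk_def using finite_Kc by auto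
lemma finite_DK: "finite (DK L t)" unfolding DK_def using finite_GK by auto
lemma finite_PK: "finite (PK m t k)" unfolding PK_def using finite_DK by auto

lemma part1:
  "Ncount E (dom_L L t1) (Hop (dom_L L t1) b1 V) \<le> Ncount E (dom_L L t2) (Hop (dom_L L t2) b2 V) + 9"
proof -
  let ?A1 = "lat ` DK L t1" and ?A2 = "lat ` DK L t2" and ?C = "lat ` CK1 L"
  have f1: "finite ?A1" and f2: "finite ?A2" using finite_DK by auto
  have C1: "?C \<subseteq> ?A1" and C2: "?C \<subseteq> ?A2" using CK1_sub by blast+
  have GtA: "Gtil L \<subseteq> lat ` DK L t" for t unfolding Gtil_eq DK_def by auto
  have eq: "\<forall>x\<in>?C. \<forall>y\<in>?C. MH ?A1 b1 V x y = MH ?A2 b2 V x y"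
  proof (intro ballI)
    fix x y assume x: "x \<in> ?C" and y: "y \<in> ?C"
    obtain p where p: "p \<in> CK1 L" "x = lat p" using x by auto
    have sub: "{z. adj x z} \<subseteq> Gtil L" using CK1_nbrs[OF p(1)] p(2) by auto
    have "coef ?A1 b1 x = coef ?A2 b2 x"
    proof -
      have "{z \<in> ?A1. adj x z} = {z. adj x z}" "{z \<in> ?A2. adj x z} = {z. adj x z}"
        using sub GtA by blast+
      then show ?thesis unfolding coef_def degA_def deg_def by (simp split: bc.splits)
    qed
    then show "MH ?A1 b1 V x y = MH ?A2 b2 V x y" unfolding MH_def by (cases "x = y") simp_all
  qed
  have "Ncount E ?A1 (opM ?A1 (MH ?A1 b1 V)) \<le> Ncount E ?A2 (opM ?A2 (MH ?A2 b2 V)) + card (?A1 - ?C)"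
    by (rule compare[OF f1 f2 symm_MH symm_MH C1 C2 eq])
  also have "card (?A1 - ?C) \<le> 9" by (rule card_DK_CK1)
  finally show ?thesis unfolding dom_eq Hop_opM[OF f1] Hop_opM[OF f2] by simp
qed

lemma symm_MH_any: "symm X (MH A b V)"
  unfolding symm_def MH_def using adj_sym by auto

lemma part2:
  fixes m :: nat
  shows "\<bar>int (Ncount E (dom_L (Suc m) t) (Hop (dom_L (Suc m) t) b V))
          - (\<Sum>i\<in>{1,2,3::nat}. int (Ncount E (subdom (Suc m) t i) (Hop (subdom (Suc m) t i) b V)))\<bar> \<le> 30"
proof -
  define D where "D = lat ` DK (Suc m) t"
  define A where "A = (\<lambda>k. lat ` PK m t k)"
  define CK where "CK = DK (Suc m) t - set (Bad2 m)"
  define CKk where "CKk = (\<lambda>k. PK m t k - set (Bad2 m))"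
  define C where "C = lat ` CK"
  define Ck where "Ck = (\<lambda>k. lat ` CKk k)"
  define Md where "Md = MH D b V"
  define Mk where "Mk = (\<lambda>k. MH (A k) b V)"
  have symMd: "symm X Md" for X unfolding Md_def by (rule symm_MH_any)
  have symMk: "symm X (Mk k)" for X k unfolding Mk_def by (rule symm_MH_any)
  have fD: "finite D" unfolding D_def using finite_DK by auto
  have fA: "finite (A k)" for k unfolding A_def using finite_PK by auto
  have fC: "finite C" unfolding C_def CK_def using finite_DK by auto
  have fCk: "finite (Ck k)" for k unfolding Ck_def CKk_def using finite_PK by auto
  have AD: "k \<in> {1,2,3} \<Longrightarrow> A k \<subseteq> D" for k unfolding A_def D_def using PK_DK by blast
  have CD: "C \<subseteq> D" unfolding C_def D_def CK_def by auto
  have CkA: "Ck k \<subseteq> A k" for k unfolding Ck_def A_def CKk_def by auto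
  have JB: "Jn m \<subseteq> set (Bad2 m)" by (rule Jn_Bad2)
  have nbr_in: "{z \<in> D. adj (lat p) z} = {z \<in> A k. adj (lat p) z}"
    if k: "k \<in> {1,2,3}" and p: "p \<in> CKk k" for k p
  proof
    show "{z \<in> A k. adj (lat p) z} \<subseteq> {z \<in> D. adj (lat p) z}" using AD[OF k] by auto
  next
    show "{z \<in> D. adj (lat p) z} \<subseteq> {z \<in> A k. adj (lat p) z}"
    proof
      fix z assume z: "z \<in> {z \<in> D. adj (lat p) z}"
      then obtain q where q: "q \<in> DK (Suc m) t" "z = lat q" unfolding D_def by auto
      have a: "adj (lat p) (lat q)" using z q by auto
      have pP: "p \<in> PK m t k" and pB: "p \<notin> set (Bad2 m)" using p unfolding CKk_def by auto
      have pJ: "p \<notin> Jn m" using pB JB by auto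
      from nbr2[OF k pP pJ q(1) a] have "q \<in> PK m t k \<or> q \<in> Jn m" .
      moreover have "q \<notin> Jn m"
      proof
        assume "q \<in> Jn m"
        from nbJ_Bad2[OF this adj_nb[OF a]] pB show False by simp
      qed
      ultimately have "q \<in> PK m t k" by simp
      then show "z \<in> {z \<in> A k. adj (lat p) z}" using q a unfolding A_def by auto
    qed
  qed
  have eqk: "\<forall>x\<in>Ck k. \<forall>y\<in>Ck k. Mk k x y = Md x y" if k: "k \<in> {1,2,3}" for k
  proof (intro ballI)
    fix x y assume x: "x \<in> Ck k" and y: "y \<in> Ck k"
    obtain p where p: "p \<in> CKk k" "x = lat p" using x unfolding Ck_def by auto
    have "coef (A k) b x = coef D b x" using coef_eq[OF nbr_in[OF k p(1)]] p(2) by simp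
    then show "Mk k x y = Md x y" unfolding Mk_def Md_def MH_def by (cases "x = y") simp_all
  qed
  have PKint: "p \<in> Jn m" if "i \<in> {1,2,3}" "k \<in> {1,2,3}" "i \<noteq> k" "p \<in> PK m t i" "p \<in> PK m t k" for i k p
    using GP_int[OF that(1,2,3)] that(4,5) PK_GP by blast
  have cross: "Md x y = 0" if ik: "i \<in> {1,2,3}" "k \<in> {1,2,3}" "i \<noteq> k" and x: "x \<in> Ck i" and y: "y \<in> Ck k" for i k x y
  proof -
    obtain p where p: "p \<in> CKk i" "x = lat p" using x unfolding Ck_def by auto
    obtain q where q: "q \<in> CKk k" "y = lat q" using y unfolding Ck_def by auto
    have pP: "p \<in> PK m t i" and pB: "p \<notin> set (Bad2 m)" using p unfolding CKk_def by auto
    have qP: "q \<in> PK m t k" and qB: "q \<notin> set (Bad2 m)" using q unfolding CKk_def by auto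
    have "p \<noteq> q"
    proof
      assume "p = q"
      then have "p \<in> Jn m" using PKint[OF ik pP] qP by simp
      then show False using pB JB by auto
    qed
    then have xy: "x \<noteq> y" using p q by simp
    have "\<not> adj y x"
    proof
      assume a: "adj y x"
      have pD: "p \<in> DK (Suc m) t" using PK_DK[OF ik(1)] pP by auto
      have qJ: "q \<notin> Jn m" using qB JB by auto
      from nbr2[OF ik(2) qP qJ pD] a p q have "p \<in> PK m t k \<or> p \<in> Jn m" by simp
      then have "p \<in> Jn m" using PKint[OF ik pP] by auto
      then show False using pB JB by auto
    qed
    then show ?thesis using xy unfolding Md_def MH_def by simp
  qed
  have Cun: "C = Ck 1 \<union> Ck 2 \<union> Ck 3"
  proof
    show "C \<subseteq> Ck 1 \<union> Ck 2 \<union> Ck 3"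
    proof
      fix x assume "x \<in> C"
      then obtain p where p: "p \<in> CK" "x = lat p" unfolding C_def by auto
      have pD: "p \<in> DK (Suc m) t" and pB: "p \<notin> set (Bad2 m)" using p unfolding CK_def by auto
      have "p \<notin> Jn m" using pB JB by auto
      from DK_cover[OF pD this] obtain k where k: "k \<in> {1,2,3}" "p \<in> PK m t k" by blast
      then have "x \<in> Ck k" using p pB unfolding Ck_def CKk_def by auto
      then show "x \<in> Ck 1 \<union> Ck 2 \<union> Ck 3" using k by auto
    qed
  next
    have "Ck k \<subseteq> C" if "k \<in> {1,2,3}" for k
      using PK_DK[OF that] unfolding Ck_def C_def CKk_def CK_def by auto
    then show "Ck 1 \<union> Ck 2 \<union> Ck 3 \<subseteq> C" by auto
  qed
  have disj: "Ck i \<inter> Ck k = {}" if ik: "i \<in> {1,2,3}" "k \<in> {1,2,3}" "i \<noteq> k" for i k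
  proof (rule ccontr)
    assume "Ck i \<inter> Ck k \<noteq> {}"
    then obtain x where x: "x \<in> Ck i" "x \<in> Ck k" by blast
    obtain p where p1: "p \<in> CKk i" "x = lat p" using x(1) unfolding Ck_def by blast
    obtain q where q1: "q \<in> CKk k" "x = lat q" using x(2) unfolding Ck_def by blast
    have p: "p \<in> CKk i" "q \<in> CKk k" using p1 q1 by auto
    have "p = q" using p1 q1 by simp
    then have "p \<in> Jn m" using PKint[OF ik] p unfolding CKk_def by auto
    then show False using p JB unfolding CKk_def by auto
  qed
  have NC: "Ncount E C (opM C Md) = Ncount E (Ck 1) (opM (Ck 1) Md) + Ncount E (Ck 2) (opM (Ck 2) Md) + Ncount E (Ck 3) (opM (Ck 3) Md)"
  proof -
    have d12: "Ck 1 \<inter> Ck 2 = {}" by (rule disj) auto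
    have d123: "(Ck 1 \<union> Ck 2) \<inter> Ck 3 = {}" using disj[of 1 3] disj[of 2 3] by auto
    have b12: "Ncount E (Ck 1 \<union> Ck 2) (opM (Ck 1 \<union> Ck 2) Md) = Ncount E (Ck 1) (opM (Ck 1) Md) + Ncount E (Ck 2) (opM (Ck 2) Md)"
      by (rule block[OF fCk fCk d12 symMd])
         (use cross[of 1 2] cross[of 2 1] in auto)
    have b3: "Ncount E ((Ck 1 \<union> Ck 2) \<union> Ck 3) (opM ((Ck 1 \<union> Ck 2) \<union> Ck 3) Md) = Ncount E (Ck 1 \<union> Ck 2) (opM (Ck 1 \<union> Ck 2) Md) + Ncount E (Ck 3) (opM (Ck 3) Md)"
      by (rule block[OF _ fCk d123 symMd])
         (use fCk cross[of 1 3] cross[of 3 1] cross[of 2 3] cross[of 3 2] in auto)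
    show ?thesis unfolding Cun b3 b12 ..
  qed
  have c1: "Ncount E D (opM D Md) \<le> Ncount E C (opM C Md) + card (D - C)"
    by (rule compare[OF fD fC symMd symMd CD order_refl]) simp
  have c2: "Ncount E C (opM C Md) \<le> Ncount E D (opM D Md) + card (C - C)"
    by (rule compare[OF fC fD symMd symMd order_refl CD]) simp
  have c3: "Ncount E (A k) (opM (A k) (Mk k)) \<le> Ncount E (Ck k) (opM (Ck k) Md) + card (A k - Ck k)"
    if k: "k \<in> {1,2,3}" for k
    by (rule compare[OF fA fCk symMk symMd CkA order_refl eqk[OF k]])
  have c4: "Ncount E (Ck k) (opM (Ck k) Md) \<le> Ncount E (A k) (opM (A k) (Mk k)) + card (Ck k - Ck k)"
    if k: "k \<in> {1,2,3}" for k
    by (rule compare[OF fCk fA symMd symMk order_refl CkA]) (use eqk[OF k] in auto)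
  have cardDC: "card (D - C) \<le> 21"
  proof -
    have "D - C \<subseteq> lat ` set (Bad2 m)" unfolding D_def C_def CK_def by auto
    then have "card (D - C) \<le> card (lat ` set (Bad2 m))" by (intro card_mono) auto
    also have "\<dots> \<le> card (set (Bad2 m))" by (rule card_image_le) simp
    also have "\<dots> \<le> length (Bad2 m)" by (rule card_length)
    finally show ?thesis using length_Bad2 by simp
  qed
  have cardAC: "card (A k - Ck k) \<le> 6" if k: "k \<in> {1,2,3}" for k
    using card_PK_Bad2[OF k, of m t] unfolding A_def Ck_def CKk_def .
  have ND: "Ncount E (dom_L (Suc m) t) (Hop (dom_L (Suc m) t) b V) = Ncount E D (opM D Md)"
    unfolding D_def Md_def dom_eq using Hop_opM[OF fD[unfolded D_def]] by simp
  have NA: "Ncount E (subdom (Suc m) t k) (Hop (subdom (Suc m) t k) b V) = Ncount E (A k) (opM (A k) (Mk k))"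
    if k: "k \<in> {1,2,3}" for k
  proof -
    have e: "subdom (Suc m) t k = A k" using subdom_eq[OF k] unfolding A_def by simp
    show ?thesis unfolding e Mk_def Hop_opM[OF fA] ..
  qed
  have sum3: "(\<Sum>i\<in>{1,2,3::nat}. int (Ncount E (subdom (Suc m) t i) (Hop (subdom (Suc m) t i) b V)))
      = int (Ncount E (A 1) (opM (A 1) (Mk 1))) + int (Ncount E (A 2) (opM (A 2) (Mk 2))) + int (Ncount E (A 3) (opM (A 3) (Mk 3)))"
    using NA[of 1] NA[of 2] NA[of 3] by simp
  show ?thesis
    unfolding ND sum3
    using c1 c2 NC c3[of 1] c3[of 2] c3[of 3] c4[of 1] c4[of 2] c4[of 3] cardDC cardAC[of 1] cardAC[of 2] cardAC[of 3]
    by simp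
qed


theorem lemma4p1:
  fixes V :: "pt \<Rightarrow> real" and L :: nat and E :: real
  assumes "L \<ge> 1"
  shows "(\<forall>t1 b1 t2 b2.
            \<bar>int (Ncount E (dom_L L t1) (Hop (dom_L L t1) b1 V))
             - int (Ncount E (dom_L L t2) (Hop (dom_L L t2) b2 V))\<bar> \<le> 9)
       \<and> (\<forall>t b.
            \<bar>int (Ncount E (dom_L L t) (Hop (dom_L L t) b V))
             - (\<Sum>i\<in>{1,2,3::nat}. int (Ncount E (subdom L t i) (Hop (subdom L t i) b V)))\<bar> \<le> 30)"
proof (intro conjI allI)
  fix t1 b1 t2 b2
  show "\<bar>int (Ncount E (dom_L L t1) (Hop (dom_L L t1) b1 V))
             - int (Ncount E (dom_L L t2) (Hop (dom_L L t2) b2 V))\<bar> \<le> 9"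
    using part1[of E L t1 b1 V t2 b2] part1[of E L t2 b2 V t1 b1] by linarith
next
  fix t b
  obtain m where m: "L = Suc m" using assms by (cases L) auto
  show "\<bar>int (Ncount E (dom_L L t) (Hop (dom_L L t) b V))
             - (\<Sum>i\<in>{1,2,3::nat}. int (Ncount E (subdom L t i) (Hop (subdom L t i) b V)))\<bar> \<le> 30"
    unfolding m by (rule part2)
qed

end
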